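(* For $d>0$ let $g_d$ be as in the context, let $h_d(x)=g_d(x)/\sqrt{1-x^2}$, $M(x)=e^{x/d}$, and $$c_2(d)=\frac{\int_0^\pi\cos\theta\,\sin^2\theta\,h_d(\cos\theta)M(\cos\theta)\sin\theta\,d\theta}{\int_0^\pi\sin^2\theta\,h_d(\cos\theta)M(\cos\theta)\sin\theta\,d\theta}.$$ Then $c_2(d)=\frac{1}{6d}+o\!\left(\frac1d\right)$ as $d\to+\infty$.
   Context: $g_d$ is the unique solution in $V=\{g:\ (1-x^2)^{-1/2}g\in L^2(-1,1),\ (1-x^2)^{1/2}\partial_xg\in L^2(-1,1)\}$ of $-(1-x^2)\partial_x[e^{x/d}(1-x^2)\partial_xg]+e^{x/d}g=-(1-x^2)^{3/2}e^{x/d}$ on $(-1,1)$ (this solution exists, is unique and is nonpositive). *)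

theory Defs
  imports "HOL-Analysis.Analysis" "HOL-Library.Landau_Symbols"
begin

text \<open>Classical formulation of the boundary value problem defining g_d.
  Weak solutions in V of this ODE (smooth coefficients on the open interval)
  are classical on (-1,1), and classical solutions lying in V are weak solutions,
  so this characterises the same function on (-1,1). Values outside (-1,1) are
  normalised to 0 to make the description unique.\<close>

definition gd_flux :: "real \<Rightarrow> (real \<Rightarrow> real) \<Rightarrow> real \<Rightarrow> real" where
  "gd_flux d g y = exp (y / d) * (1 - y\<^sup>2) * deriv g y"

definition is_gd :: "real \<Rightarrow> (real \<Rightarrow> real) \<Rightarrow> bool" where
  "is_gd d g \<longleftrightarrow>
     (\<forall>x. x \<notin> {-1<..<1} \<longrightarrow> g x = 0) \<and>
     (\<lambda>x. (g x)\<^sup>2 / (1 - x\<^sup>2)) integrable_on {-1<..<1} \<and>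
     (\<lambda>x. (1 - x\<^sup>2) * (deriv g x)\<^sup>2) integrable_on {-1<..<1} \<and>
     (\<forall>x\<in>{-1<..<1}.
        g differentiable (at x) \<and>
        gd_flux d g differentiable (at x) \<and>
        - (1 - x\<^sup>2) * deriv (gd_flux d g) x + exp (x / d) * g x
          = - ((1 - x\<^sup>2) powr (3/2)) * exp (x / d))"

definition gd :: "real \<Rightarrow> real \<Rightarrow> real" where
  "gd d = (THE g. is_gd d g)"

definition hd :: "real \<Rightarrow> real \<Rightarrow> real" where
  "hd d x = gd d x / sqrt (1 - x\<^sup>2)"

definition Mfun :: "real \<Rightarrow> real \<Rightarrow> real" where
  "Mfun d x = exp (x / d)"

definition c2 :: "real \<Rightarrow> real" where
  "c2 d =
     integral {0..pi} (\<lambda>\<theta>. cos \<theta> * (sin \<theta>)\<^sup>2 * hd d (cos \<theta>) * Mfun d (cos \<theta>) * sin \<theta>)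
   / integral {0..pi} (\<lambda>\<theta>. (sin \<theta>)\<^sup>2 * hd d (cos \<theta>) * Mfun d (cos \<theta>) * sin \<theta>)"

end

theory Submission
  imports Defs "HOL-Analysis.Analysis"
begin


lemma ftc_real:
  fixes F f :: "real \<Rightarrow> real"
  assumes "a \<le> b" "\<And>x. x \<in> {a..b} \<Longrightarrow> (F has_real_derivative f x) (at x)"
  shows "(f has_integral (F b - F a)) {a..b}"
  using assms by (intro fundamental_theorem_of_calculus)
     (auto simp: has_real_derivative_iff_has_vector_derivative[symmetric] intro: has_field_derivative_at_within)

definition PP :: "(real \<Rightarrow> real) \<Rightarrow> real \<Rightarrow> real" where
  "PP f x = integral {-1..x} (\<lambda>y. (1+y) * f y)"
definition QQ :: "(real \<Rightarrow> real) \<Rightarrow> real \<Rightarrow> real" where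
  "QQ f x = integral {x..1} (\<lambda>y. (1-y) * f y)"
definition p1 :: "(real \<Rightarrow> real) \<Rightarrow> real \<Rightarrow> real" where
  "p1 f x = PP f x / (1+x)"
definition q1 :: "(real \<Rightarrow> real) \<Rightarrow> real \<Rightarrow> real" where
  "q1 f x = QQ f x / (1-x)"
definition Gr :: "(real \<Rightarrow> real) \<Rightarrow> real \<Rightarrow> real" where
  "Gr f x = (p1 f x + q1 f x) / 2"

lemma int_lin1: "((\<lambda>y::real. B * (1+y)) has_integral (B*(1+x)\<^sup>2/2)) {-1..x}" if "-1 \<le> x"
proof -
  have "((\<lambda>y::real. B * (1+y)) has_integral (B*(1+x)\<^sup>2/2 - B*(1+(-1))\<^sup>2/2)) {-1..x}"
    by (rule ftc_real[OF that]) (auto intro!: derivative_eq_intros simp: power2_eq_square algebra_simps)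
  then show ?thesis by simp
qed

lemma int_lin2: "((\<lambda>y::real. B * (1-y)) has_integral (B*(1-x)\<^sup>2/2)) {x..1}" if "x \<le> 1"
proof -
  have "((\<lambda>y::real. B * (1-y)) has_integral ((-B*(1-1)\<^sup>2/2) - (-B*(1-x)\<^sup>2/2))) {x..1}"
    by (rule ftc_real[OF that]) (auto intro!: derivative_eq_intros simp: power2_eq_square field_simps)
  then show ?thesis by simp
qed

context
  fixes f :: "real \<Rightarrow> real" and B :: real
  assumes cf: "continuous_on {-1..1} f" and fB: "\<And>y. y \<in> {-1..1} \<Longrightarrow> \<bar>f y\<bar> \<le> B"
begin

lemma PP_bound: assumes "x \<in> {-1..1}" shows "\<bar>PP f x\<bar> \<le> B*(1+x)\<^sup>2/2"
proof -
  have sub: "{-1..x} \<subseteq> {-1..1}" using assms by auto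
  have "\<bar>PP f x\<bar> \<le> integral {-1..x} (\<lambda>y::real. B * (1+y))"
    unfolding PP_def
    apply (rule integral_norm_bound_integral[where 'a=real, simplified])
      apply (rule integrable_continuous_interval)
      apply (rule continuous_on_subset[OF _ sub]) apply (intro continuous_intros cf)
     apply (rule has_integral_integrable[OF int_lin1]) using assms apply simp
    using fB sub by (auto simp: abs_mult mult.commute[of B] intro!: mult_left_mono)
  also have "\<dots> = B*(1+x)\<^sup>2/2" by (rule integral_unique[OF int_lin1]) (use assms in auto)
  finally show ?thesis .
qed

lemma QQ_bound: assumes "x \<in> {-1..1}" shows "\<bar>QQ f x\<bar> \<le> B*(1-x)\<^sup>2/2"
proof -
  have sub: "{x..1} \<subseteq> {-1..1}" using assms by auto
  have "\<bar>QQ f x\<bar> \<le> integral {x..1} (\<lambda>y::real. B * (1-y))"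
    unfolding QQ_def
    apply (rule integral_norm_bound_integral[where 'a=real, simplified])
      apply (rule integrable_continuous_interval)
      apply (rule continuous_on_subset[OF _ sub]) apply (intro continuous_intros cf)
     apply (rule has_integral_integrable[OF int_lin2]) using assms apply simp
    using fB sub by (auto simp: abs_mult mult.commute[of B] intro!: mult_left_mono)
  also have "\<dots> = B*(1-x)\<^sup>2/2" by (rule integral_unique[OF int_lin2]) (use assms in auto)
  finally show ?thesis .
qed

lemma p1_bound: assumes "x \<in> {-1..1}" shows "\<bar>p1 f x\<bar> \<le> B*(1+x)/2"
proof (cases "x = -1")
  case True
  have "0 \<le> B" using fB[of 0] by auto
  then show ?thesis using True by (simp add: p1_def)
next
  case False
  then have pos: "1 + x > 0" using assms by auto
  have "\<bar>p1 f x\<bar> = \<bar>PP f x\<bar> / (1+x)" using pos by (simp add: p1_def abs_div)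
  also have "\<dots> \<le> (B*(1+x)\<^sup>2/2) / (1+x)" using PP_bound[OF assms] pos by (intro divide_right_mono) auto
  also have "\<dots> = B*(1+x)/2" using pos by (simp add: power2_eq_square field_simps)
  finally show ?thesis .
qed

lemma q1_bound: assumes "x \<in> {-1..1}" shows "\<bar>q1 f x\<bar> \<le> B*(1-x)/2"
proof (cases "x = 1")
  case True
  have "0 \<le> B" using fB[of 0] by auto
  then show ?thesis using True by (simp add: q1_def)
next
  case False
  then have pos: "1 - x > 0" using assms by auto
  have "\<bar>q1 f x\<bar> = \<bar>QQ f x\<bar> / (1-x)" using pos by (simp add: q1_def abs_div)
  also have "\<dots> \<le> (B*(1-x)\<^sup>2/2) / (1-x)" using QQ_bound[OF assms] pos by (intro divide_right_mono) auto
  also have "\<dots> = B*(1-x)/2" using pos by (simp add: power2_eq_square field_simps)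
  finally show ?thesis .
qed

lemma Gr_bound: assumes "x \<in> {-1..1}" shows "\<bar>Gr f x\<bar> \<le> B/2"
proof -
  have "\<bar>Gr f x\<bar> \<le> (\<bar>p1 f x\<bar> + \<bar>q1 f x\<bar>)/2" by (simp add: Gr_def)
  also have "\<dots> \<le> (B*(1+x)/2 + B*(1-x)/2)/2" using p1_bound[OF assms] q1_bound[OF assms] by simp
  also have "\<dots> = B/2" by (simp add: field_simps)
  finally show ?thesis .
qed

end

lemma PP_cont: "continuous_on {-1..1} f \<Longrightarrow> continuous_on {-1..1} (PP f)"
  unfolding PP_def
  by (intro indefinite_integral_continuous_1 integrable_continuous_interval continuous_intros)

lemma QQ_cont: "continuous_on {-1..1} f \<Longrightarrow> continuous_on {-1..1} (QQ f)"
  unfolding QQ_def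
  by (intro indefinite_integral_continuous_1' integrable_continuous_interval continuous_intros)

lemma bound_exists:
  assumes "continuous_on {-1..1} (f::real\<Rightarrow>real)"
  obtains B where "\<And>y. y \<in> {-1..1} \<Longrightarrow> \<bar>f y\<bar> \<le> B"
proof -
  have "compact (f ` {-1..1})" by (rule compact_continuous_image[OF assms]) simp
  then obtain B where "\<forall>z \<in> f ` {-1..1}. norm z \<le> B"
    using compact_imp_bounded bounded_iff by metis
  then show ?thesis using that by (metis atLeastAtMost_iff image_eqI real_norm_def)
qed


lemma p1_cont:
  assumes cf: "continuous_on {-1..1} f"
  shows "continuous_on {-1..1} (p1 f)"
proof -
  obtain B where fB: "\<And>y. y \<in> {-1..1} \<Longrightarrow> \<bar>f y\<bar> \<le> B" using bound_exists[OF cf] by blast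
  have PPc: "continuous_on {-1..1} (PP f)" by (rule PP_cont[OF cf])
  show ?thesis unfolding continuous_on_eq_continuous_within
  proof
    fix x :: real assume x: "x \<in> {-1..1}"
    show "continuous (at x within {-1..1}) (p1 f)"
    proof (cases "x = -1")
      case True
      have "(p1 f \<longlongrightarrow> 0) (at x within {-1..1})"
      proof (rule Lim_null_comparison)
        show "\<forall>\<^sub>F y in at x within {-1..1}. norm (p1 f y) \<le> B*(1+y)/2"
          unfolding eventually_at_filter by (rule always_eventually) (use p1_bound[OF cf fB] in auto)
        have "((\<lambda>y. B*(1+y)/2) \<longlongrightarrow> B*(1+x)/2) (at x within {-1..1})"
          by (intro tendsto_intros) auto
        then show "((\<lambda>y. B*(1+y)/2) \<longlongrightarrow> 0) (at x within {-1..1})" using True by simp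
      qed
      then show ?thesis using True by (simp add: continuous_within p1_def)
    next
      case False
      have "(PP f \<longlongrightarrow> PP f x) (at x within {-1..1})"
        using PPc x by (simp add: continuous_on_eq_continuous_within continuous_within)
      then have "((\<lambda>y. PP f y / (1+y)) \<longlongrightarrow> PP f x / (1+x)) (at x within {-1..1})"
        using False by (intro tendsto_intros) auto
      then show ?thesis by (simp add: continuous_within p1_def[abs_def])
    qed
  qed
qed

lemma q1_cont:
  assumes cf: "continuous_on {-1..1} f"
  shows "continuous_on {-1..1} (q1 f)"
proof -
  obtain B where fB: "\<And>y. y \<in> {-1..1} \<Longrightarrow> \<bar>f y\<bar> \<le> B" using bound_exists[OF cf] by blast
  have QQc: "continuous_on {-1..1} (QQ f)" by (rule QQ_cont[OF cf])
  show ?thesis unfolding continuous_on_eq_continuous_within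
  proof
    fix x :: real assume x: "x \<in> {-1..1}"
    show "continuous (at x within {-1..1}) (q1 f)"
    proof (cases "x = 1")
      case True
      have "(q1 f \<longlongrightarrow> 0) (at x within {-1..1})"
      proof (rule Lim_null_comparison)
        show "\<forall>\<^sub>F y in at x within {-1..1}. norm (q1 f y) \<le> B*(1-y)/2"
          unfolding eventually_at_filter by (rule always_eventually) (use q1_bound[OF cf fB] in auto)
        have "((\<lambda>y. B*(1-y)/2) \<longlongrightarrow> B*(1-x)/2) (at x within {-1..1})"
          by (intro tendsto_intros) auto
        then show "((\<lambda>y. B*(1-y)/2) \<longlongrightarrow> 0) (at x within {-1..1})" using True by simp
      qed
      then show ?thesis using True by (simp add: continuous_within q1_def)
    next
      case False
      have "(QQ f \<longlongrightarrow> QQ f x) (at x within {-1..1})"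
        using QQc x by (simp add: continuous_on_eq_continuous_within continuous_within)
      then have "((\<lambda>y. QQ f y / (1-y)) \<longlongrightarrow> QQ f x / (1-x)) (at x within {-1..1})"
        using False by (intro tendsto_intros) auto
      then show ?thesis by (simp add: continuous_within q1_def[abs_def])
    qed
  qed
qed

lemma Gr_cont: "continuous_on {-1..1} f \<Longrightarrow> continuous_on {-1..1} (Gr f)"
  unfolding Gr_def by (intro continuous_intros p1_cont q1_cont) auto

lemma at_open_I: "x \<in> {-1<..<1} \<Longrightarrow> (F has_real_derivative D) (at x within {-1..1}) \<Longrightarrow>
   (F has_real_derivative D) (at x)"
  by (metis at_within_open greaterThanLessThan_subseteq_atLeastAtMost_iff has_field_derivative_subset
      open_greaterThanLessThan order_refl)

lemma PP_deriv:
  assumes cf: "continuous_on {-1..1} f" and x: "x \<in> {-1<..<1}"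
  shows "(PP f has_real_derivative (1+x) * f x) (at x)"
proof -
  have "((\<lambda>x. integral {-1..x} (\<lambda>y. (1+y) * f y)) has_real_derivative (1+x) * f x) (at x within {-1..1})"
    by (rule integral_has_real_derivative) (use x in \<open>auto intro!: continuous_intros cf\<close>)
  then show ?thesis unfolding PP_def[abs_def] using at_open_I[OF x] by blast
qed

lemma QQ_deriv:
  assumes cf: "continuous_on {-1..1} f" and x: "x \<in> {-1<..<1}"
  shows "(QQ f has_real_derivative - ((1-x) * f x)) (at x)"
proof -
  have "((\<lambda>x. integral {x..1} (\<lambda>y. (1-y) * f y)) has_real_derivative - ((1-x) * f x)) (at x within {-1..1})"
    by (rule integral_has_real_derivative') (use x in \<open>auto intro!: continuous_intros cf\<close>)
  then show ?thesis unfolding QQ_def[abs_def] using at_open_I[OF x] by blast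
qed

lemma p1_deriv:
  assumes cf: "continuous_on {-1..1} f" and x: "x \<in> {-1<..<1}"
  shows "(p1 f has_real_derivative (f x - p1 f x / (1+x))) (at x)"
proof -
  have "((\<lambda>y. PP f y / (1+y)) has_real_derivative (((1+x) * f x) * (1+x) - PP f x * 1) / ((1+x)*(1+x))) (at x)"
    by (rule DERIV_divide[OF PP_deriv[OF cf x]]) (use x in \<open>auto intro!: derivative_eq_intros\<close>)
  moreover have "(((1+x) * f x) * (1+x) - PP f x * 1) / ((1+x)*(1+x)) = f x - p1 f x / (1+x)"
    using x by (simp add: p1_def divide_simps power2_eq_square)
  ultimately show ?thesis unfolding p1_def[abs_def] by simp
qed

lemma q1_deriv:
  assumes cf: "continuous_on {-1..1} f" and x: "x \<in> {-1<..<1}"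
  shows "(q1 f has_real_derivative (- f x + q1 f x / (1-x))) (at x)"
proof -
  have "((\<lambda>y. QQ f y / (1-y)) has_real_derivative ((- ((1-x) * f x)) * (1-x) - QQ f x * (-1)) / ((1-x)*(1-x))) (at x)"
    by (rule DERIV_divide[OF QQ_deriv[OF cf x]]) (use x in \<open>auto intro!: derivative_eq_intros\<close>)
  moreover have "((- ((1-x) * f x)) * (1-x) - QQ f x * (-1)) / ((1-x)*(1-x)) = - f x + q1 f x / (1-x)"
    using x by (simp add: q1_def divide_simps power2_eq_square)
  ultimately show ?thesis unfolding q1_def[abs_def] by simp
qed

lemma Gr_add:
  assumes cf: "continuous_on {-1..1} f" and cg: "continuous_on {-1..1} g" and x: "x \<in> {-1..1}"
  shows "Gr (\<lambda>y. f y + g y) x = Gr f x + Gr g x"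
proof -
  have s1: "{-1..x} \<subseteq> {-1..1}" "{x..1} \<subseteq> {-1..1}" using x by auto
  have i1: "(\<lambda>y. (1+y) * f y) integrable_on {-1..x}" "(\<lambda>y. (1+y) * g y) integrable_on {-1..x}"
    by (auto intro!: integrable_continuous_interval continuous_intros
        continuous_on_subset[OF cf s1(1)] continuous_on_subset[OF cg s1(1)])
  have i2: "(\<lambda>y. (1-y) * f y) integrable_on {x..1}" "(\<lambda>y. (1-y) * g y) integrable_on {x..1}"
    by (auto intro!: integrable_continuous_interval continuous_intros
        continuous_on_subset[OF cf s1(2)] continuous_on_subset[OF cg s1(2)])
  have "PP (\<lambda>y. f y + g y) x = PP f x + PP g x"
    unfolding PP_def using integral_add[OF i1] by (simp add: distrib_left)
  moreover have "QQ (\<lambda>y. f y + g y) x = QQ f x + QQ g x"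
    unfolding QQ_def using integral_add[OF i2] by (simp add: distrib_left)
  ultimately show ?thesis by (simp add: Gr_def p1_def q1_def add_divide_distrib)
qed

lemma Gr_cmult: "Gr (\<lambda>y. a * f y) x = a * Gr f x"
proof -
  have "PP (\<lambda>y. a * f y) x = a * PP f x"
    unfolding PP_def by (simp add: mult.left_commute[of _ a])
  moreover have "QQ (\<lambda>y. a * f y) x = a * QQ f x"
    unfolding QQ_def by (simp add: mult.left_commute[of _ a])
  ultimately show ?thesis by (simp add: Gr_def p1_def q1_def field_simps)
qed

lemma Gr_cong:
  assumes "\<And>y. y \<in> {-1..1} \<Longrightarrow> f y = g y" "x \<in> {-1..1}"
  shows "Gr f x = Gr g x"
proof -
  have "PP f x = PP g x" unfolding PP_def by (rule integral_cong) (use assms in auto)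
  moreover have "QQ f x = QQ g x" unfolding QQ_def by (rule integral_cong) (use assms in auto)
  ultimately show ?thesis by (simp add: Gr_def p1_def q1_def)
qed

lemma Gr_one: assumes x: "x \<in> {-1..1}" shows "Gr (\<lambda>y. 1) x = 1/2"
proof -
  have "PP (\<lambda>y. 1) x = (1+x)^2/2"
    unfolding PP_def using integral_unique[OF int_lin1[of x 1]] x by simp
  moreover have "QQ (\<lambda>y. 1) x = (1-x)^2/2"
    unfolding QQ_def using integral_unique[OF int_lin2[of x 1]] x by simp
  ultimately have "p1 (\<lambda>y. 1) x = (1+x)/2" "q1 (\<lambda>y. 1) x = (1-x)/2"
    by (auto simp: p1_def q1_def power2_eq_square)
  then show ?thesis by (simp add: Gr_def field_simps)
qed

lemma Gr_id: assumes x: "x \<in> {-1..1}" shows "Gr (\<lambda>y. y) x = x/6"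
proof -
  have "((\<lambda>y. (1+y) * y) has_integral ((x^2/2 + x^3/3) - ((-1)^2/2 + (-1)^3/3))) {-1..x}"
    by (rule ftc_real) (use x in \<open>auto intro!: derivative_eq_intros simp: power2_eq_square power3_eq_cube field_simps\<close>)
  then have "PP (\<lambda>y. y) x = (1+x)^2*(2*x-1)/6"
    unfolding PP_def by (simp add: integral_unique power2_eq_square power3_eq_cube field_simps)
  moreover
  have "((\<lambda>y. (1-y) * y) has_integral ((1^2/2 - 1^3/3) - (x^2/2 - x^3/3))) {x..1}"
    by (rule ftc_real) (use x in \<open>auto intro!: derivative_eq_intros simp: power2_eq_square power3_eq_cube field_simps\<close>)
  then have "QQ (\<lambda>y. y) x = (1-x)^2*(1+2*x)/6"
    unfolding QQ_def by (simp add: integral_unique power2_eq_square power3_eq_cube field_simps)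
  ultimately have "p1 (\<lambda>y. y) x = (1+x)*(2*x-1)/6" "q1 (\<lambda>y. y) x = (1-x)*(1+2*x)/6"
    by (auto simp: p1_def q1_def power2_eq_square)
  then show ?thesis by (simp add: Gr_def field_simps)
qed



definition rr :: "real \<Rightarrow> real \<Rightarrow> real" where "rr d x = exp (x / (2*d))"
definition cc :: "real \<Rightarrow> real \<Rightarrow> real" where "cc d x = x/d - (1-x\<^sup>2)/(4*d\<^sup>2)"
definition cl :: "real \<Rightarrow> real" where "cl x = max (-1) (min 1 x)"
definition FF :: "real \<Rightarrow> (real \<Rightarrow> real) \<Rightarrow> real \<Rightarrow> real" where
  "FF d u y = - rr d y + cc d y * u y"

lemma cl_in: "cl x \<in> {-1..1}" by (auto simp: cl_def)
lemma cl_id: "x \<in> {-1..1} \<Longrightarrow> cl x = x" by (auto simp: cl_def)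
lemma cl_cont: "continuous_on UNIV cl" unfolding cl_def by (intro continuous_intros)

lemma cc_bound: assumes "d \<ge> 2" "y \<in> {-1..1}" shows "\<bar>cc d y\<bar> \<le> 9/16"
proof -
  have y2: "0 \<le> 1 - y\<^sup>2" "1 - y\<^sup>2 \<le> 1" using assms(2) by (auto simp: abs_square_le_1)
  have a: "\<bar>y/d\<bar> \<le> 1/2" using assms by (auto simp: abs_div divide_simps)
  have "d\<^sup>2 \<ge> 4" using assms power_mono[of 2 d 2] by auto
  then have "(1-y\<^sup>2)/(4*d\<^sup>2) \<le> 1/(4*4)" using y2 by (intro frac_le) auto
  moreover have "0 \<le> (1-y\<^sup>2)/(4*d\<^sup>2)" using y2 by auto
  ultimately have b: "\<bar>(1-y\<^sup>2)/(4*d\<^sup>2)\<bar> \<le> 1/16" using abs_of_nonneg[of "(1-y\<^sup>2)/(4*d\<^sup>2)"] by linarith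
  show ?thesis unfolding cc_def using a b by linarith
qed

lemma FF_cont: assumes "continuous_on UNIV u" shows "continuous_on S (FF d u)"
proof -
  have "continuous_on UNIV (FF d u)"
    unfolding FF_def rr_def cc_def divide_inverse by (intro continuous_intros assms)
  then show ?thesis by (rule continuous_on_subset) simp
qed

lemma Gcl_bcont:
  assumes "continuous_on {-1..1} f"
  shows "(\<lambda>x. Gr f (cl x)) \<in> bcontfun"
proof -
  obtain B where fB: "\<And>y. y \<in> {-1..1} \<Longrightarrow> \<bar>f y\<bar> \<le> B" using bound_exists[OF assms] by blast
  show ?thesis
  proof (rule bcontfun_normI)
    show "continuous_on UNIV (\<lambda>x. Gr f (cl x))"
      by (rule continuous_on_compose2[OF Gr_cont[OF assms] cl_cont]) (auto simp: cl_def)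
    show "norm (Gr f (cl x)) \<le> B/2" for x
      using Gr_bound[OF assms fB cl_in] by simp
  qed
qed

definition TT :: "real \<Rightarrow> (real \<Rightarrow>\<^sub>C real) \<Rightarrow> (real \<Rightarrow>\<^sub>C real)" where
  "TT d u = Bcontfun (\<lambda>x. Gr (FF d (apply_bcontfun u)) (cl x))"

lemma TT_apply: "apply_bcontfun (TT d u) x = Gr (FF d (apply_bcontfun u)) (cl x)"
proof -
  have "(\<lambda>x. Gr (FF d (apply_bcontfun u)) (cl x)) \<in> bcontfun"
    by (rule Gcl_bcont) (rule FF_cont, simp)
  then show ?thesis unfolding TT_def by (simp add: Bcontfun_inverse)
qed

lemma TT_contr:
  assumes d: "d \<ge> 2"
  shows "dist (TT d u1) (TT d u2) \<le> 9/32 * dist u1 u2"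
proof (rule dist_bound)
  fix x
  let ?z = "cl x"
  have z: "?z \<in> {-1..1}" by (rule cl_in)
  let ?F1 = "FF d (apply_bcontfun u1)" and ?F2 = "FF d (apply_bcontfun u2)"
  let ?H = "\<lambda>y. cc d y * (apply_bcontfun u1 y - apply_bcontfun u2 y)"
  have "continuous_on UNIV ?H" unfolding cc_def divide_inverse by (intro continuous_intros) auto
  then have cH: "continuous_on {-1..1} ?H" by (rule continuous_on_subset) simp
  have c2: "continuous_on {-1..1} ?F2" by (rule FF_cont) simp
  have "Gr ?F1 ?z = Gr (\<lambda>y. ?F2 y + ?H y) ?z"
    by (rule Gr_cong[OF _ z]) (simp add: FF_def algebra_simps)
  also have "\<dots> = Gr ?F2 ?z + Gr ?H ?z" by (rule Gr_add[OF c2 cH z])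
  finally have eq: "Gr ?F1 ?z - Gr ?F2 ?z = Gr ?H ?z" by simp
  have hb: "\<bar>?H y\<bar> \<le> 9/16 * dist u1 u2" if "y \<in> {-1..1}" for y
  proof -
    have "\<bar>?H y\<bar> = \<bar>cc d y\<bar> * \<bar>apply_bcontfun u1 y - apply_bcontfun u2 y\<bar>" by (simp add: abs_mult)
    also have "\<dots> \<le> 9/16 * dist u1 u2"
      using cc_bound[OF d that] dist_bounded[of u1 y u2]
      by (intro mult_mono) (auto simp: dist_real_def)
    finally show ?thesis .
  qed
  have "\<bar>Gr ?H ?z\<bar> \<le> (9/16 * dist u1 u2)/2" by (rule Gr_bound[OF cH hb z]) 
  then show "dist (apply_bcontfun (TT d u1) x) (apply_bcontfun (TT d u2) x) \<le> 9/32 * dist u1 u2"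
    using eq by (simp add: TT_apply dist_real_def)
qed

lemma TT_fix: assumes "d \<ge> 2" shows "\<exists>!u. TT d u = u"
proof -
  have "\<forall>x y. dist (TT d x) (TT d y) \<le> 9/32 * dist x y" using TT_contr[OF assms] by blast
  then show ?thesis by (rule banach_fix_type[rotated 2]) auto
qed

definition vfix :: "real \<Rightarrow> (real \<Rightarrow>\<^sub>C real)" where "vfix d = (THE u. TT d u = u)"
definition vv :: "real \<Rightarrow> real \<Rightarrow> real" where "vv d = apply_bcontfun (vfix d)"

lemma vfix_eq: "d \<ge> 2 \<Longrightarrow> TT d (vfix d) = vfix d"
  unfolding vfix_def by (rule theI'[OF TT_fix])

lemma vv_cont: "continuous_on S (vv d)"
  unfolding vv_def by simp

lemma vv_eq_all: "d \<ge> 2 \<Longrightarrow> vv d x = Gr (FF d (vv d)) (cl x)"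
  using vfix_eq[of d] TT_apply[of d "vfix d" x] unfolding vv_def by metis

lemma vv_eq: "d \<ge> 2 \<Longrightarrow> x \<in> {-1..1} \<Longrightarrow> vv d x = Gr (FF d (vv d)) x"
  using vv_eq_all[of d x] cl_id[of x] by simp

lemma FFv_cont: "continuous_on S (FF d (vv d))"
  by (rule FF_cont) (simp add: vv_cont)



definition gsol :: "real \<Rightarrow> real \<Rightarrow> real" where
  "gsol d x = (if x \<in> {-1<..<1} then sqrt (1-x\<^sup>2) * exp (-x/(2*d)) * vv d x else 0)"

definition ZZ :: "real \<Rightarrow> real \<Rightarrow> real" where
  "ZZ d x = q1 (FF d (vv d)) x - p1 (FF d (vv d)) x
      - (1-x\<^sup>2) * (p1 (FF d (vv d)) x + q1 (FF d (vv d)) x) / (2*d)"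

definition PhiF :: "real \<Rightarrow> real \<Rightarrow> real" where
  "PhiF d x = rr d x * sqrt (1-x\<^sup>2) * ZZ d x / 2"

lemma T0:
  fixes x d r p q :: real
  assumes "-1<x" "x<1" "d>0"
  shows "-((1-x\<^sup>2)/(4*d))*(q - p - (1-x\<^sup>2)*(p+q)/(2*d)) + (x/2)*(q - p - (1-x\<^sup>2)*(p+q)/(2*d))
     - ((1-x\<^sup>2)/2)*(-2*(- r + (x/d - (1-x\<^sup>2)/(4*d\<^sup>2)) * ((p+q)/2)) + q/(1-x) + p/(1+x) - ((1-x)*q - (1+x)*p)/(2*d)) + (p+q)/2 = - (1-x\<^sup>2) * r"
proof -
  have xx: "x*x < 1" using assms abs_square_less_1[of x] by (simp add: power2_eq_square)
  have "1-x \<noteq> 0" "1+x\<noteq>0" "1 - x*x \<noteq> 0" "d*d*8 - d*(d*(x*(x*8))) \<noteq> 0" using assms xx by auto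
  then show ?thesis using assms apply (simp add: field_simps power2_eq_square) done
qed

lemma ode_alg:
  fixes x d r P Q s :: real
  assumes x: "-1<x" "x<1" and d: "d>0" and s: "s > 0" "s\<^sup>2 = 1 - x\<^sup>2" and r: "r > 0"
  shows "- (1-x\<^sup>2) * (((r * s/(2*d) - r*x/s) * (Q - P - (1-x\<^sup>2)*(P+Q)/(2*d))
        + r * s*(-2*(- r + (x/d - (1-x\<^sup>2)/(4*d\<^sup>2)) * ((P+Q)/2)) + Q/(1-x) + P/(1+x) - ((1-x)*Q - (1+x)*P)/(2*d)))/2)
        + (r*r) * (s * (1/r) * ((P+Q)/2)) = - (s * (1-x\<^sup>2)) * (r*r)"
proof -
  define Z where "Z = Q - P - (1-x\<^sup>2)*(P+Q)/(2*d)"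
  define Z' where "Z' = -2*(- r + (x/d - (1-x\<^sup>2)/(4*d\<^sup>2)) * ((P+Q)/2)) + Q/(1-x) + P/(1+x) - ((1-x)*Q - (1+x)*P)/(2*d)"
  define k where "k = r*x/s"
  have A: "-((1-x\<^sup>2)/(4*d))*Z + (x/2)*Z - ((1-x\<^sup>2)/2)*Z' + (P+Q)/2 = - (1-x\<^sup>2) * r"
    unfolding Z_def Z'_def by (rule T0[OF x d])
  have kk: "(1-x\<^sup>2) * k = r*x * s" unfolding k_def s(2)[symmetric] using s(1) by (simp add: power2_eq_square)
  have "- (1-x\<^sup>2) * ((r * s/(2*d) - k) * Z + r * s * Z')/2 + (r*r) * (s * (1/r) * ((P+Q)/2))
      = - (1-x\<^sup>2) * ((r * s/(2*d)) * Z + r * s * Z')/2 + ((1-x\<^sup>2) * k) * Z / 2 + (r*r) * (s * (1/r) * ((P+Q)/2))"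
    using d by (simp add: field_simps)
  also have "\<dots> = r * s * (-((1-x\<^sup>2)/(4*d))*Z + (x/2)*Z - ((1-x\<^sup>2)/2)*Z' + (P+Q)/2)"
    unfolding kk using r d by (simp add: field_simps)
  also have "\<dots> = - (s * (1-x\<^sup>2)) * (r*r)" unfolding A by (simp add: algebra_simps)
  finally show ?thesis unfolding Z_def Z'_def k_def by (simp add: mult.assoc)
qed

lemma flux_alg:
  fixes y d r P Q s :: real
  assumes y: "-1<y" "y<1" and d: "d>0" and s: "s > 0" "s\<^sup>2 = 1 - y\<^sup>2" and r: "r > 0"
  shows "(r*r) * (1-y\<^sup>2) * ((-y / s) * (1/r) * ((P+Q)/2) + s * (- (1/r) / (2*d)) * ((P+Q)/2)
     + s * (1/r) * ((Q/(1-y) - P/(1+y))/2)) = r * s * (Q - P - (1-y\<^sup>2)*(P+Q)/(2*d)) / 2"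
proof -
  define k where "k = y/s"
  have kk: "(1-y\<^sup>2) * k = y * s" unfolding k_def s(2)[symmetric] using s(1) by (simp add: power2_eq_square)
  have n: "1 - y \<noteq> 0" "1 + y \<noteq> 0" using y by auto
  have fy: "1 - y\<^sup>2 = (1-y)*(1+y)" by (simp add: power2_eq_square algebra_simps)
  have yy: "y*y \<noteq> 1" "1 - y*y \<noteq> 0" using y abs_square_less_1[of y] by (auto simp: power2_eq_square)
  have "(r*r) * (1-y\<^sup>2) * ((-y / s) * (1/r) * ((P+Q)/2) + s * (- (1/r) / (2*d)) * ((P+Q)/2)
     + s * (1/r) * ((Q/(1-y) - P/(1+y))/2))
     = r * (- ((1-y\<^sup>2) * k) * ((P+Q)/2) + (1-y\<^sup>2) * s * (- 1 / (2*d)) * ((P+Q)/2)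
     + (1-y\<^sup>2) * s * ((Q/(1-y) - P/(1+y))/2))"
    unfolding k_def using r s(1) d by (simp add: field_simps)
  also have "\<dots> = r * s * (Q - P - (1-y\<^sup>2)*(P+Q)/(2*d)) / 2"
    unfolding kk unfolding fy using n d yy by (simp add: field_simps)
  finally show ?thesis .
qed

lemma powr32: "0 < a \<Longrightarrow> (a::real) powr (3/2) = sqrt a * a"
proof -
  assume a: "0 < a"
  have "a powr (3/2) = a powr (1/2 + 1)" by simp
  also have "\<dots> = a powr (1/2) * a" by (subst powr_add) (use a in auto)
  finally show ?thesis using a by (simp add: powr_half_sqrt)
qed

lemma sq_pos: "x \<in> {-1<..<(1::real)} \<Longrightarrow> 0 < 1 - x\<^sup>2"
  by (auto simp: abs_square_less_1)

context fixes d :: real assumes d: "d \<ge> 2"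
begin

abbreviation "F \<equiv> FF d (vv d)"
abbreviation "P \<equiv> p1 (FF d (vv d))"
abbreviation "Q \<equiv> q1 (FF d (vv d))"

lemma v_PQ: "x \<in> {-1..1} \<Longrightarrow> vv d x = (P x + Q x)/2"
  using vv_eq[OF d] by (simp add: Gr_def)

lemma v_deriv: assumes x: "x \<in> {-1<..<1}"
  shows "(vv d has_real_derivative (Q x/(1-x) - P x/(1+x))/2) (at x)"
proof -
  have "((\<lambda>y. (P y + Q y)/2) has_real_derivative ((F x - P x/(1+x)) + (- F x + Q x/(1-x)))/2) (at x)"
    by (intro DERIV_cdivide DERIV_add p1_deriv[OF FFv_cont x] q1_deriv[OF FFv_cont x])
  then have "((\<lambda>y. (P y + Q y)/2) has_real_derivative (Q x/(1-x) - P x/(1+x))/2) (at x)"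
    by (simp add: algebra_simps)
  then show ?thesis
    by (rule has_field_derivative_transform_within_open[of _ _ _ "{-1<..<1}"]) (use x v_PQ in auto)
qed

definition G1 :: "real \<Rightarrow> real" where
  "G1 x = (-x / sqrt (1-x\<^sup>2)) * exp (-x/(2*d)) * vv d x
     + sqrt (1-x\<^sup>2) * (- exp (-x/(2*d)) / (2*d)) * vv d x
     + sqrt (1-x\<^sup>2) * exp (-x/(2*d)) * ((Q x/(1-x) - P x/(1+x))/2)"

lemma g_deriv: assumes x: "x \<in> {-1<..<1}"
  shows "(gsol d has_real_derivative G1 x) (at x)"
proof -
  have pos: "0 < 1 - x\<^sup>2" using sq_pos[OF x] .
  have S: "((\<lambda>y. sqrt (1-y\<^sup>2)) has_real_derivative (-x / sqrt (1-x\<^sup>2))) (at x)"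
    using pos by (auto intro!: derivative_eq_intros simp: field_simps)
  have Ed: "((\<lambda>y. exp (-y/(2*d))) has_real_derivative (- exp (-x/(2*d)) / (2*d))) (at x)"
    using d by (auto intro!: derivative_eq_intros simp: field_simps)
  have "((\<lambda>y. sqrt (1-y\<^sup>2) * exp (-y/(2*d)) * vv d y) has_real_derivative
      (sqrt (1-x\<^sup>2) * exp (-x/(2*d))) * ((Q x/(1-x) - P x/(1+x))/2)
      + (sqrt (1-x\<^sup>2) * (- exp (-x/(2*d)) / (2*d)) + (-x / sqrt (1-x\<^sup>2)) * exp (-x/(2*d))) * vv d x) (at x)"
    by (intro DERIV_mult' S Ed v_deriv[OF x])
  moreover have "(sqrt (1-x\<^sup>2) * exp (-x/(2*d))) * ((Q x/(1-x) - P x/(1+x))/2)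
      + (sqrt (1-x\<^sup>2) * (- exp (-x/(2*d)) / (2*d)) + (-x / sqrt (1-x\<^sup>2)) * exp (-x/(2*d))) * vv d x = G1 x"
    unfolding G1_def by (simp add: algebra_simps)
  ultimately have "((\<lambda>y. sqrt (1-y\<^sup>2) * exp (-y/(2*d)) * vv d y) has_real_derivative G1 x) (at x)" by simp
  then show ?thesis
    by (rule has_field_derivative_transform_within_open[of _ _ _ "{-1<..<1}"]) (use x in \<open>auto simp: gsol_def\<close>)
qed


definition ZD :: "real \<Rightarrow> real" where
  "ZD x = -2 * F x + Q x/(1-x) + P x/(1+x) - ((1-x)*Q x - (1+x)*P x)/(2*d)"

definition PhiD :: "real \<Rightarrow> real" where
  "PhiD x = ((rr d x * sqrt (1-x\<^sup>2)/(2*d) - rr d x * x / sqrt (1-x\<^sup>2)) * ZZ d x + rr d x * sqrt (1-x\<^sup>2) * ZD x)/2"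

lemma d_pos: "d > 0" using d by simp

lemma flux_eq: assumes y: "y \<in> {-1<..<1}" shows "gd_flux d (gsol d) y = PhiF d y"
proof -
  have s: "sqrt (1-y\<^sup>2) > 0" "(sqrt (1-y\<^sup>2))\<^sup>2 = 1 - y\<^sup>2" using sq_pos[OF y] by auto
  have r: "rr d y > 0" by (simp add: rr_def)
  have yi: "y \<in> {-1..1}" using y by auto
  have e1: "exp (y/d) = rr d y * rr d y" by (simp add: rr_def exp_add[symmetric])
  have e2: "exp (-y/(2*d)) = 1 / rr d y" by (simp add: rr_def exp_minus field_simps)
  have "gd_flux d (gsol d) y = exp (y/d) * (1-y\<^sup>2) * G1 y"
    unfolding gd_flux_def using DERIV_imp_deriv[OF g_deriv[OF y]] by simp
  also have "\<dots> = PhiF d y"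
    unfolding G1_def PhiF_def ZZ_def e1 e2 v_PQ[OF yi]
    using flux_alg[OF _ _ d_pos s r, of "P y" "Q y"] y by simp
  finally show ?thesis .
qed

lemma P_der: "x \<in> {-1<..<1} \<Longrightarrow> D = F x - P x / (1+x) \<Longrightarrow> (P has_real_derivative D) (at x)"
  using p1_deriv[OF FFv_cont] by simp
lemma Q_der: "x \<in> {-1<..<1} \<Longrightarrow> D = - F x + Q x / (1-x) \<Longrightarrow> (Q has_real_derivative D) (at x)"
  using q1_deriv[OF FFv_cont] by simp

lemma ZZ_deriv: assumes x: "x \<in> {-1<..<1}" shows "(ZZ d has_real_derivative ZD x) (at x)"
proof -
  have n: "1 - x \<noteq> 0" "1 + x \<noteq> 0" using x by auto
  have PQ: "((\<lambda>y. P y + Q y) has_real_derivative (F x - P x / (1+x)) + (- F x + Q x / (1-x))) (at x)"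
    by (intro DERIV_add P_der[OF x refl] Q_der[OF x refl])
  have sq: "((\<lambda>y. 1 - y\<^sup>2) has_real_derivative - (2*x)) (at x)"
    by (auto intro!: derivative_eq_intros)
  have "((\<lambda>y. (Q y - P y) - (1-y\<^sup>2) * (P y + Q y) / (2*d)) has_real_derivative
      ((- F x + Q x / (1-x)) - (F x - P x / (1+x))) -
      ((1-x\<^sup>2) * ((F x - P x / (1+x)) + (- F x + Q x / (1-x))) + (- (2*x)) * (P x + Q x)) / (2*d)) (at x)"
    by (intro DERIV_diff DERIV_cdivide DERIV_mult'[OF sq PQ] P_der[OF x refl] Q_der[OF x refl])
  moreover have "((- F x + Q x / (1-x)) - (F x - P x / (1+x))) -
      ((1-x\<^sup>2) * ((F x - P x / (1+x)) + (- F x + Q x / (1-x))) + (- (2*x)) * (P x + Q x)) / (2*d) = ZD x"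
  proof -
    have fx: "1 - x\<^sup>2 = (1-x)*(1+x)" by (simp add: power2_eq_square algebra_simps)
    have xx: "x*x \<noteq> 1" "1 - x*x \<noteq> 0" using x abs_square_less_1[of x] by (auto simp: power2_eq_square)
    have e: "(1-x\<^sup>2) * ((F x - P x / (1+x)) + (- F x + Q x / (1-x))) = (1+x) * Q x - (1-x) * P x"
      unfolding fx using n xx by (simp add: field_simps)
    show ?thesis unfolding e ZD_def by (simp add: algebra_simps diff_divide_distrib add_divide_distrib)
  qed
  ultimately show ?thesis unfolding ZZ_def[abs_def] by simp
qed

lemma Phi_deriv: assumes x: "x \<in> {-1<..<1}" shows "(PhiF d has_real_derivative PhiD x) (at x)"
proof -
  have pos: "0 < 1 - x\<^sup>2" using sq_pos[OF x] .
  have S: "((\<lambda>y. sqrt (1-y\<^sup>2)) has_real_derivative (-x / sqrt (1-x\<^sup>2))) (at x)"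
    using pos by (auto intro!: derivative_eq_intros simp: field_simps)
  have R: "(rr d has_real_derivative rr d x / (2*d)) (at x)"
    unfolding rr_def[abs_def] using d_pos by (auto intro!: derivative_eq_intros simp: field_simps)
  have "((\<lambda>y. rr d y * sqrt (1-y\<^sup>2) * ZZ d y / 2) has_real_derivative
     ((rr d x * sqrt (1-x\<^sup>2)) * ZD x + (rr d x * (-x / sqrt (1-x\<^sup>2)) + rr d x / (2*d) * sqrt (1-x\<^sup>2)) * ZZ d x) / 2) (at x)"
    by (intro DERIV_cdivide DERIV_mult' R S ZZ_deriv[OF x])
  moreover have "((rr d x * sqrt (1-x\<^sup>2)) * ZD x + (rr d x * (-x / sqrt (1-x\<^sup>2)) + rr d x / (2*d) * sqrt (1-x\<^sup>2)) * ZZ d x) / 2 = PhiD x"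
    unfolding PhiD_def by (simp add: algebra_simps)
  ultimately show ?thesis unfolding PhiF_def[abs_def] by simp
qed

lemma ode: assumes x: "x \<in> {-1<..<1}"
  shows "- (1 - x\<^sup>2) * PhiD x + exp (x / d) * gsol d x = - ((1 - x\<^sup>2) powr (3/2)) * exp (x / d)"
proof -
  have pos: "0 < 1 - x\<^sup>2" using sq_pos[OF x] .
  have s: "sqrt (1-x\<^sup>2) > 0" "(sqrt (1-x\<^sup>2))\<^sup>2 = 1 - x\<^sup>2" using pos by auto
  have r: "rr d x > 0" by (simp add: rr_def)
  have e1: "exp (x/d) = rr d x * rr d x" by (simp add: rr_def exp_add[symmetric])
  have e2: "exp (-x/(2*d)) = 1 / rr d x" by (simp add: rr_def exp_minus field_simps)
  have xi: "x \<in> {-1..1}" using x by auto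
  have Fx: "F x = - rr d x + (x/d - (1-x\<^sup>2)/(4*d\<^sup>2)) * ((P x + Q x)/2)"
    by (simp add: FF_def cc_def v_PQ[OF xi])
  have g: "gsol d x = sqrt (1-x\<^sup>2) * (1 / rr d x) * vv d x" using x e2 by (simp add: gsol_def)
  show ?thesis
    unfolding PhiD_def ZZ_def ZD_def Fx g e1 powr32[OF pos] v_PQ[OF xi]
    by (rule ode_alg[OF _ _ d_pos s r]) (use x in auto)
qed


lemma flux_deriv: assumes x: "x \<in> {-1<..<1}" shows "(gd_flux d (gsol d) has_real_derivative PhiD x) (at x)"
  by (rule has_field_derivative_transform_within_open[OF Phi_deriv[OF x], of "{-1<..<1}"])
     (use x flux_eq in auto)

lemma ZZ_cont: "continuous_on {-1..1} (ZZ d)"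
  unfolding ZZ_def[abs_def] divide_inverse
  by (intro continuous_intros p1_cont q1_cont FFv_cont)

lemma G1_sq: assumes x: "x \<in> {-1<..<1}" shows "(1-x\<^sup>2) * (G1 x)\<^sup>2 = (ZZ d x / (2 * rr d x))\<^sup>2"
proof -
  have pos: "0 < 1 - x\<^sup>2" using sq_pos[OF x] .
  have r: "rr d x > 0" by (simp add: rr_def)
  have e1: "exp (x/d) = rr d x * rr d x" by (simp add: rr_def exp_add[symmetric])
  have "exp (x/d) * (1-x\<^sup>2) * G1 x = PhiF d x"
    using flux_eq[OF x] DERIV_imp_deriv[OF g_deriv[OF x]] by (simp add: gd_flux_def)
  then have "G1 x = rr d x * sqrt (1-x\<^sup>2) * ZZ d x / 2 / (rr d x * rr d x * (1-x\<^sup>2))"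
    unfolding e1 PhiF_def using r pos by (simp add: field_simps)
  also have "\<dots> = rr d x * sqrt (1-x\<^sup>2) * ZZ d x / 2 / (rr d x * rr d x * (sqrt (1-x\<^sup>2))\<^sup>2)"
    using pos by simp
  also have "\<dots> = ZZ d x / (2 * rr d x * sqrt (1-x\<^sup>2))"
    using r pos by (simp add: field_simps power2_eq_square)
  finally have G: "G1 x = ZZ d x / (2 * rr d x * sqrt (1-x\<^sup>2))" .
  have "(1-x\<^sup>2) * (G1 x)\<^sup>2 = (sqrt (1-x\<^sup>2))\<^sup>2 * (ZZ d x / (2 * rr d x * sqrt (1-x\<^sup>2)))\<^sup>2"
    unfolding G using pos by simp
  also have "\<dots> = (ZZ d x / (2 * rr d x))\<^sup>2"
    using r pos by (simp add: field_simps power2_eq_square)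
  finally show ?thesis .
qed

lemma gsol_is_gd: "is_gd d (gsol d)"
  unfolding is_gd_def
proof (intro conjI ballI allI impI)
  show "gsol d x = 0" if "x \<notin> {-1<..<1}" for x by (subst gsol_def) (simp only: that if_False)
  have c1: "continuous_on {-1..1} (\<lambda>x. (exp (-x/(2*d)) * vv d x)\<^sup>2)"
    unfolding divide_inverse by (intro continuous_intros vv_cont)
  have "(\<lambda>x. (exp (-x/(2*d)) * vv d x)\<^sup>2) integrable_on {-1<..<1}"
    using integrable_continuous_interval[OF c1] integrable_on_open_interval_real by blast
  then show "(\<lambda>x. (gsol d x)\<^sup>2 / (1 - x\<^sup>2)) integrable_on {-1<..<1}"
  proof (rule integrable_eq)
    fix x :: real assume x: "x \<in> {-1<..<1}"
    have pos: "0 < 1 - x\<^sup>2" using sq_pos[OF x] .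
    then show "(exp (-x/(2*d)) * vv d x)\<^sup>2 = (gsol d x)\<^sup>2 / (1 - x\<^sup>2)"
      using x by (simp add: gsol_def power_mult_distrib)
  qed
  have c2: "continuous_on {-1..1} (\<lambda>x. (ZZ d x / (2 * rr d x))\<^sup>2)"
    unfolding rr_def by (intro continuous_intros ZZ_cont) (use d_pos in auto)
  have "(\<lambda>x. (ZZ d x / (2 * rr d x))\<^sup>2) integrable_on {-1<..<1}"
    using integrable_continuous_interval[OF c2] integrable_on_open_interval_real by blast
  then show "(\<lambda>x. (1 - x\<^sup>2) * (deriv (gsol d) x)\<^sup>2) integrable_on {-1<..<1}"
  proof (rule integrable_eq)
    fix x :: real assume x: "x \<in> {-1<..<1}"
    show "(ZZ d x / (2 * rr d x))\<^sup>2 = (1 - x\<^sup>2) * (deriv (gsol d) x)\<^sup>2"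
      using G1_sq[OF x] DERIV_imp_deriv[OF g_deriv[OF x]] by simp
  qed
  fix x :: real assume x: "x \<in> {-1<..<1}"
  show "gsol d differentiable at x" using g_deriv[OF x] real_differentiable_def by blast
  show "gd_flux d (gsol d) differentiable at x" using flux_deriv[OF x] real_differentiable_def by blast
  show "- (1 - x\<^sup>2) * deriv (gd_flux d (gsol d)) x + exp (x / d) * gsol d x =
    - ((1 - x\<^sup>2) powr (3 / 2)) * exp (x / d)"
    using ode[OF x] DERIV_imp_deriv[OF flux_deriv[OF x]] by simp
qed

end


lemma Ioo_leb: "{a<..<b::real} \<in> sets lebesgue" by simp

lemma amgm: assumes "t > 0" shows "\<bar>a * c\<bar> \<le> ((a::real)\<^sup>2 / t + t * c\<^sup>2) / 2"
proof -
  have "0 \<le> (\<bar>a\<bar> - t * \<bar>c\<bar>)\<^sup>2 / t" using assms by simp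
  also have "(\<bar>a\<bar> - t * \<bar>c\<bar>)\<^sup>2 / t = a\<^sup>2 / t + t * c\<^sup>2 - 2 * \<bar>a * c\<bar>"
    using assms by (simp add: power2_eq_square field_simps abs_mult)
  finally show ?thesis by simp
qed

lemma int_inv_right:
  fixes b1 \<eta> :: real
  assumes "b1 \<le> 1 - \<eta>" "\<eta> > 0"
  shows "((\<lambda>x. 1/(1-x)) has_integral (ln (1-b1) - ln \<eta>)) {b1..1-\<eta>}"
proof -
  have "((\<lambda>x. 1/(1-x)) has_integral ((- ln (1-(1-\<eta>))) - (- ln (1-b1)))) {b1..1-\<eta>}"
    by (rule ftc_real[OF assms(1)]) (use assms in \<open>auto intro!: derivative_eq_intros simp: field_simps\<close>)
  then show ?thesis by simp
qed

lemma int_inv_left: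
  fixes a1 \<eta> :: real
  assumes "-1 + \<eta> \<le> a1" "\<eta> > 0"
  shows "((\<lambda>x. 1/(1+x)) has_integral (ln (1+a1) - ln \<eta>)) {-1+\<eta>..a1}"
proof -
  have "((\<lambda>x. 1/(1+x)) has_integral (ln (1+a1) - ln (1+(-1+\<eta>)))) {-1+\<eta>..a1}"
    by (rule ftc_real[OF assms(1)]) (use assms in \<open>auto intro!: derivative_eq_intros simp: field_simps\<close>)
  then show ?thesis by simp
qed

lemma blowup_right:
  fixes m :: "real \<Rightarrow> real"
  assumes mi: "m integrable_on {-1..1}" and m0: "\<And>x. x \<in> {-1..1} \<Longrightarrow> 0 \<le> m x"
    and b1: "-1 \<le> b1" "b1 < 1" and K: "K \<ge> 0"
    and le: "\<And>x. b1 \<le> x \<Longrightarrow> x < 1 \<Longrightarrow> 1/(1-x) \<le> K * m x"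
  shows False
proof -
  define C where "C = K * integral {-1..1} m"
  have C0: "C \<ge> 0" unfolding C_def using K integral_nonneg[OF mi m0] by simp
  define \<eta> where "\<eta> = (1-b1) * exp (-(C+1))"
  have \<eta>0: "\<eta> > 0" using b1 by (simp add: \<eta>_def)
  have "exp (-(C+1)) < 1" using C0 by simp
  then have \<eta>1: "\<eta> < 1 - b1" using b1 unfolding \<eta>_def by (simp add: mult_less_cancel_left1)
  have sub: "{b1..1-\<eta>} \<subseteq> {-1..1}" using b1 \<eta>0 by auto
  have "ln (1-b1) - ln \<eta> = integral {b1..1-\<eta>} (\<lambda>x. 1/(1-x))"
    using int_inv_right[of b1 \<eta>] \<eta>0 \<eta>1 by (simp add: integral_unique)
  also have "\<dots> \<le> integral {b1..1-\<eta>} (\<lambda>x. K * m x)"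
  proof (rule integral_le)
    show "(\<lambda>x. 1/(1-x)) integrable_on {b1..1-\<eta>}"
      using int_inv_right[of b1 \<eta>] \<eta>0 \<eta>1 by (auto intro: has_integral_integrable)
    show "(\<lambda>x. K * m x) integrable_on {b1..1-\<eta>}"
      by (intro integrable_on_mult_right integrable_on_subinterval[OF mi sub])
    show "1/(1-x) \<le> K * m x" if "x \<in> {b1..1-\<eta>}" for x using le that \<eta>0 by auto
  qed
  also have "\<dots> = K * integral {b1..1-\<eta>} m" by simp
  also have "\<dots> \<le> K * integral {-1..1} m"
    by (intro mult_left_mono integral_subset_le sub integrable_on_subinterval[OF mi sub] mi K) (use m0 in auto)
  finally have "ln (1-b1) - ln \<eta> \<le> C" unfolding C_def .
  moreover have "ln \<eta> = ln (1-b1) - (C+1)" unfolding \<eta>_def using b1 by (simp add: ln_mult)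
  ultimately show False by simp
qed

lemma blowup_left:
  fixes m :: "real \<Rightarrow> real"
  assumes mi: "m integrable_on {-1..1}" and m0: "\<And>x. x \<in> {-1..1} \<Longrightarrow> 0 \<le> m x"
    and a1: "-1 < a1" "a1 \<le> 1" and K: "K \<ge> 0"
    and le: "\<And>x. -1 < x \<Longrightarrow> x \<le> a1 \<Longrightarrow> 1/(1+x) \<le> K * m x"
  shows False
proof -
  define C where "C = K * integral {-1..1} m"
  have C0: "C \<ge> 0" unfolding C_def using K integral_nonneg[OF mi m0] by simp
  define \<eta> where "\<eta> = (1+a1) * exp (-(C+1))"
  have \<eta>0: "\<eta> > 0" using a1 by (simp add: \<eta>_def)
  have "exp (-(C+1)) < 1" using C0 by simp
  then have \<eta>1: "\<eta> < 1 + a1" using a1 unfolding \<eta>_def by (simp add: mult_less_cancel_left1)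
  have sub: "{-1+\<eta>..a1} \<subseteq> {-1..1}" using a1 \<eta>0 by auto
  have "ln (1+a1) - ln \<eta> = integral {-1+\<eta>..a1} (\<lambda>x. 1/(1+x))"
    using int_inv_left[of \<eta> a1] \<eta>0 \<eta>1 by (simp add: integral_unique)
  also have "\<dots> \<le> integral {-1+\<eta>..a1} (\<lambda>x. K * m x)"
  proof (rule integral_le)
    show "(\<lambda>x. 1/(1+x)) integrable_on {-1+\<eta>..a1}"
      using int_inv_left[of \<eta> a1] \<eta>0 \<eta>1 by (auto intro: has_integral_integrable)
    show "(\<lambda>x. K * m x) integrable_on {-1+\<eta>..a1}"
      by (intro integrable_on_mult_right integrable_on_subinterval[OF mi sub])
    show "1/(1+x) \<le> K * m x" if "x \<in> {-1+\<eta>..a1}" for x using le that \<eta>0 by auto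
  qed
  also have "\<dots> = K * integral {-1+\<eta>..a1} m" by simp
  also have "\<dots> \<le> K * integral {-1..1} m"
    by (intro mult_left_mono integral_subset_le sub integrable_on_subinterval[OF mi sub] mi K) (use m0 in auto)
  finally have "ln (1+a1) - ln \<eta> \<le> C" unfolding C_def .
  moreover have "ln \<eta> = ln (1+a1) - (C+1)" unfolding \<eta>_def using a1 by (simp add: ln_mult)
  ultimately show False by simp
qed


lemma sq_diff_le: "((a::real) - b)\<^sup>2 \<le> 2 * a\<^sup>2 + 2 * b\<^sup>2"
proof -
  have "0 \<le> (a+b)\<^sup>2" by simp
  then show ?thesis unfolding power2_diff power2_sum by linarith
qed

lemma one_minus_sq_le: assumes "-1 < (x::real)" "x < 1"
  shows "1 - x\<^sup>2 \<le> 2 * (1-x)" "1 - x\<^sup>2 \<le> 2 * (1+x)"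
proof -
  have "(1-x)*(1+x) \<le> (1-x)*2" using assms by (intro mult_left_mono) auto
  then show "1 - x\<^sup>2 \<le> 2 * (1-x)" by (simp add: power2_eq_square algebra_simps)
  have "(1+x)*(1-x) \<le> (1+x)*2" using assms by (intro mult_left_mono) auto
  then show "1 - x\<^sup>2 \<le> 2 * (1+x)" by (simp add: power2_eq_square algebra_simps)
qed

lemma sq_ne1: "-1 < (x::real) \<Longrightarrow> x < 1 \<Longrightarrow> x\<^sup>2 = 1 \<Longrightarrow> False"
  using abs_square_less_1[of x] by auto

lemma deriv_cont_on:
  assumes d: "d > 0" and g: "is_gd d g"
  shows "continuous_on {-1<..<1} (deriv g)"
proof -
  have fd: "\<forall>x\<in>{-1<..<1}. gd_flux d g differentiable at x" using g unfolding is_gd_def by blast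
  have cf: "continuous_on {-1<..<1} (gd_flux d g)"
    using fd by (intro continuous_at_imp_continuous_on) (auto intro: differentiable_imp_continuous_within)
  have "continuous_on {-1<..<1} (\<lambda>x. gd_flux d g x / (exp (x/d) * (1-x\<^sup>2)))"
    unfolding divide_inverse[of "x::real" d for x]
    by (intro continuous_intros cf) (auto dest: sq_ne1)
  then show ?thesis
  proof (rule continuous_on_eq)
    fix x :: real assume x: "x \<in> {-1<..<1}"
    then have "1 - x\<^sup>2 > 0" by (auto simp: abs_square_less_1)
    then show "gd_flux d g x / (exp (x/d) * (1-x\<^sup>2)) = deriv g x" by (simp add: gd_flux_def)
  qed
qed

lemma g_cont_on:
  assumes g: "is_gd d g"
  shows "continuous_on {-1<..<1} g"
proof -
  have "\<forall>x\<in>{-1<..<1}. g differentiable at x" using g unfolding is_gd_def by blast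
  then show ?thesis
    by (intro continuous_at_imp_continuous_on) (auto intro: differentiable_imp_continuous_within)
qed

lemma is_gd_unique:
  assumes d: "d > 0" and g1: "is_gd d g1" and g2: "is_gd d g2"
  shows "g1 = g2"
proof -
  let ?I = "{-1<..<1::real}"
  define w where "w x = exp (x/d)" for x
  define h where "h x = g1 x - g2 x" for x
  define hp where "hp x = deriv g1 x - deriv g2 x" for x
  define Fl where "Fl x = gd_flux d g1 x - gd_flux d g2 x" for x
  define Fp where "Fp x = deriv (gd_flux d g1) x - deriv (gd_flux d g2) x" for x
  define \<phi> where "\<phi> x = h x * Fl x" for x
  define e where "e x = w x * (1-x\<^sup>2) * (hp x)\<^sup>2 + w x * (h x)\<^sup>2 / (1-x\<^sup>2)" for x
  define m where "m x = ((h x)\<^sup>2 / (1-x\<^sup>2) + (1-x\<^sup>2) * (hp x)\<^sup>2) / 2" for x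
  note G1 = g1[unfolded is_gd_def] and G2 = g2[unfolded is_gd_def]
  have pos: "1 - x\<^sup>2 > 0" if "x \<in> ?I" for x using that by (auto simp: abs_square_less_1)
  have wpos: "w x > 0" for x by (simp add: w_def)
  have hder: "(h has_real_derivative hp x) (at x)" if x: "x \<in> ?I" for x
    unfolding h_def[abs_def] hp_def
    using G1 G2 x by (intro DERIV_diff) (auto simp: DERIV_deriv_iff_real_differentiable)
  have Flder: "(Fl has_real_derivative Fp x) (at x)" if x: "x \<in> ?I" for x
    unfolding Fl_def[abs_def] Fp_def
    using G1 G2 x by (intro DERIV_diff) (auto simp: DERIV_deriv_iff_real_differentiable)
  have Fp_eq: "Fp x = w x * h x / (1-x\<^sup>2)" if x: "x \<in> ?I" for x
  proof -
    have "- (1 - x\<^sup>2) * deriv (gd_flux d g1) x + exp (x / d) * g1 x = - (1 - x\<^sup>2) * deriv (gd_flux d g2) x + exp (x / d) * g2 x"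
      using G1 G2 x by auto
    then have "(1 - x\<^sup>2) * Fp x = w x * h x" unfolding Fp_def w_def h_def by (simp add: algebra_simps)
    then show ?thesis using pos[OF x] by (simp add: field_simps)
  qed
  have Fl_eq: "Fl x = w x * (1-x\<^sup>2) * hp x" for x
    unfolding Fl_def gd_flux_def w_def hp_def by (simp add: algebra_simps)
  have phider: "(\<phi> has_real_derivative e x) (at x)" if x: "x \<in> ?I" for x
  proof -
    have "(\<phi> has_real_derivative h x * Fp x + hp x * Fl x) (at x)"
      unfolding \<phi>_def[abs_def] by (rule DERIV_mult'[OF hder[OF x] Flder[OF x]])
    moreover have "h x * Fp x + hp x * Fl x = e x"
      unfolding Fp_eq[OF x] Fl_eq e_def using pos[OF x] by (simp add: power2_eq_square field_simps)
    ultimately show ?thesis by simp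
  qed
  have e0: "e x \<ge> 0" if x: "x \<in> ?I" for x
    unfolding e_def using pos[OF x] wpos[of x] by (intro add_nonneg_nonneg) auto
  have mono: "\<phi> a \<le> \<phi> b" if "a \<in> ?I" "b \<in> ?I" "a \<le> b" for a b
  proof (rule DERIV_nonneg_imp_increasing_open[OF that(3)])
    show "\<exists>y. (\<phi> has_real_derivative y) (at x) \<and> 0 \<le> y" if "a < x" "x < b" for x
      using phider e0 that \<open>a \<in> ?I\<close> \<open>b \<in> ?I\<close> by (metis greaterThanLessThan_iff order.strict_trans)
    have "\<forall>x\<in>{a..b}. isCont \<phi> x"
      using phider that by (metis DERIV_isCont atLeastAtMost_iff greaterThanLessThan_iff order.strict_trans1 order.strict_trans2)
    then show "continuous_on {a..b} \<phi>" by (rule continuous_at_imp_continuous_on)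
  qed
  have hc: "continuous_on ?I h" unfolding h_def[abs_def]
    by (intro continuous_intros g_cont_on[OF g1] g_cont_on[OF g2])
  have hpc: "continuous_on ?I hp" unfolding hp_def[abs_def]
    by (intro continuous_intros deriv_cont_on[OF d g1] deriv_cont_on[OF d g2])
  have i1: "(\<lambda>x. (h x)\<^sup>2 / (1-x\<^sup>2)) integrable_on ?I"
  proof (rule measurable_bounded_by_integrable_imp_integrable_real)
    show "(\<lambda>x. (h x)\<^sup>2 / (1-x\<^sup>2)) \<in> borel_measurable (lebesgue_on ?I)"
      by (rule continuous_imp_measurable_on_sets_lebesgue) (auto intro!: continuous_intros hc dest: sq_ne1)
    show "(\<lambda>x. 2 * ((g1 x)\<^sup>2 / (1-x\<^sup>2)) + 2 * ((g2 x)\<^sup>2 / (1-x\<^sup>2))) integrable_on ?I"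
      using G1 G2 by (intro integrable_add integrable_on_mult_right) auto
    show "\<bar>(h x)\<^sup>2 / (1-x\<^sup>2)\<bar> \<le> 2 * ((g1 x)\<^sup>2 / (1-x\<^sup>2)) + 2 * ((g2 x)\<^sup>2 / (1-x\<^sup>2))" if x: "x \<in> ?I" for x
    proof -
      have "(h x)\<^sup>2 \<le> 2 * (g1 x)\<^sup>2 + 2 * (g2 x)\<^sup>2"
        unfolding h_def by (rule sq_diff_le)
      then have le: "(h x)\<^sup>2/(1-x\<^sup>2) \<le> (2*(g1 x)\<^sup>2 + 2*(g2 x)\<^sup>2)/(1-x\<^sup>2)"
        using pos[OF x] by (intro divide_right_mono) auto
      have ab: "\<bar>(h x)\<^sup>2/(1-x\<^sup>2)\<bar> = (h x)\<^sup>2/(1-x\<^sup>2)" using pos[OF x] by simp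
      show ?thesis unfolding ab using le by (simp add: add_divide_distrib)
    qed
  qed (rule Ioo_leb)
  have i2: "(\<lambda>x. (1-x\<^sup>2) * (hp x)\<^sup>2) integrable_on ?I"
  proof (rule measurable_bounded_by_integrable_imp_integrable_real)
    show "(\<lambda>x. (1-x\<^sup>2) * (hp x)\<^sup>2) \<in> borel_measurable (lebesgue_on ?I)"
      by (rule continuous_imp_measurable_on_sets_lebesgue) (auto intro!: continuous_intros hpc)
    show "(\<lambda>x. 2 * ((1-x\<^sup>2) * (deriv g1 x)\<^sup>2) + 2 * ((1-x\<^sup>2) * (deriv g2 x)\<^sup>2)) integrable_on ?I"
      using G1 G2 by (intro integrable_add integrable_on_mult_right) auto
    show "\<bar>(1-x\<^sup>2) * (hp x)\<^sup>2\<bar> \<le> 2 * ((1-x\<^sup>2) * (deriv g1 x)\<^sup>2) + 2 * ((1-x\<^sup>2) * (deriv g2 x)\<^sup>2)" if x: "x \<in> ?I" for x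
    proof -
      have "(hp x)\<^sup>2 \<le> 2 * (deriv g1 x)\<^sup>2 + 2 * (deriv g2 x)\<^sup>2"
        unfolding hp_def by (rule sq_diff_le)
      then have le: "(1-x\<^sup>2) * (hp x)\<^sup>2 \<le> (1-x\<^sup>2) * (2 * (deriv g1 x)\<^sup>2 + 2 * (deriv g2 x)\<^sup>2)"
        using pos[OF x] by (intro mult_left_mono) auto
      have ab: "\<bar>(1-x\<^sup>2) * (hp x)\<^sup>2\<bar> = (1-x\<^sup>2) * (hp x)\<^sup>2" using pos[OF x] by simp
      show ?thesis unfolding ab using le by (simp add: algebra_simps)
    qed
  qed (rule Ioo_leb)
  have "(\<lambda>x. ((h x)\<^sup>2/(1-x\<^sup>2) + (1-x\<^sup>2)*(hp x)\<^sup>2) * (1/2)) integrable_on ?I"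
    by (intro integrable_on_mult_left integrable_add i1 i2)
  then have mi: "m integrable_on {-1..1}"
    unfolding m_def integrable_on_open_interval_real[symmetric] by simp
  have m0: "0 \<le> m x" if "x \<in> {-1..1}" for x
  proof -
    have "0 \<le> 1 - x\<^sup>2" using that by (auto simp: abs_square_le_1)
    then show ?thesis unfolding m_def by auto
  qed
  have phim: "\<bar>\<phi> x\<bar> \<le> w x * (1-x\<^sup>2) * m x" if x: "x \<in> ?I" for x
  proof -
    have "\<bar>\<phi> x\<bar> = w x * (1-x\<^sup>2) * \<bar>h x * hp x\<bar>"
      unfolding \<phi>_def Fl_eq using pos[OF x] wpos[of x] by (simp add: abs_mult)
    also have "\<dots> \<le> w x * (1-x\<^sup>2) * m x"
      unfolding m_def using amgm[OF pos[OF x], of "h x" "hp x"] pos[OF x] wpos[of x]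
      by (intro mult_left_mono) auto
    finally show ?thesis .
  qed
  have wle: "w x \<le> exp (1/d)" if "x \<in> ?I" for x
    unfolding w_def using that d by (auto simp: divide_right_mono)
  have small_r: "\<exists>b. b0 < b \<and> b < 1 \<and> \<bar>\<phi> b\<bar> < \<epsilon>" if "\<epsilon> > 0" "b0 \<in> ?I" for \<epsilon> b0
  proof (rule ccontr)
    assume "\<not> ?thesis"
    then have big: "\<epsilon> \<le> \<bar>\<phi> b\<bar>" if "b0 < b" "b < 1" for b using that by force
    define b1 where "b1 = (b0+1)/2"
    show False
    proof (rule blowup_right[OF mi m0, of b1 "2 * exp (1/d) / \<epsilon>"])
      show "-1 \<le> b1" "b1 < 1" using \<open>b0 \<in> ?I\<close> by (auto simp: b1_def)
      show "0 \<le> 2 * exp (1/d) / \<epsilon>" using \<open>\<epsilon> > 0\<close> by simp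
      fix x :: real assume x: "b1 \<le> x" "x < 1"
      have xI: "x \<in> ?I" "b0 < x" using x \<open>b0 \<in> ?I\<close> by (auto simp: b1_def)
      have "\<epsilon> \<le> w x * (1-x\<^sup>2) * m x" using big[OF xI(2) x(2)] phim[OF xI(1)] by linarith
      also have "\<dots> \<le> exp (1/d) * (2 * (1-x)) * m x"
      proof (intro mult_right_mono mult_mono wle xI(1))
        show "1 - x\<^sup>2 \<le> 2 * (1-x)" using xI one_minus_sq_le by auto
        show "0 \<le> m x" using m0 xI by auto
      qed (use pos[OF xI(1)] in auto)
      finally have "\<epsilon> \<le> exp (1/d) * (2 * (1-x)) * m x" .
      then show "1/(1-x) \<le> 2 * exp (1/d) / \<epsilon> * m x"
        using x \<open>\<epsilon> > 0\<close> by (simp add: field_simps)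
    qed
  qed
  have small_l: "\<exists>a. -1 < a \<and> a < a0 \<and> \<bar>\<phi> a\<bar> < \<epsilon>" if "\<epsilon> > 0" "a0 \<in> ?I" for \<epsilon> a0
  proof (rule ccontr)
    assume "\<not> ?thesis"
    then have big: "\<epsilon> \<le> \<bar>\<phi> a\<bar>" if "-1 < a" "a < a0" for a using that by force
    define a1 where "a1 = (a0-1)/2"
    show False
    proof (rule blowup_left[OF mi m0, of a1 "2 * exp (1/d) / \<epsilon>"])
      show "-1 < a1" "a1 \<le> 1" using \<open>a0 \<in> ?I\<close> by (auto simp: a1_def)
      show "0 \<le> 2 * exp (1/d) / \<epsilon>" using \<open>\<epsilon> > 0\<close> by simp
      fix x :: real assume x: "-1 < x" "x \<le> a1"
      have xI: "x \<in> ?I" "x < a0" using x \<open>a0 \<in> ?I\<close> by (auto simp: a1_def)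
      have "\<epsilon> \<le> w x * (1-x\<^sup>2) * m x" using big[OF x(1) xI(2)] phim[OF xI(1)] by linarith
      also have "\<dots> \<le> exp (1/d) * (2 * (1+x)) * m x"
      proof (intro mult_right_mono mult_mono wle xI(1))
        show "1 - x\<^sup>2 \<le> 2 * (1+x)" using xI one_minus_sq_le by auto
        show "0 \<le> m x" using m0 xI by auto
      qed (use pos[OF xI(1)] in auto)
      finally have "\<epsilon> \<le> exp (1/d) * (2 * (1+x)) * m x" .
      then show "1/(1+x) \<le> 2 * exp (1/d) / \<epsilon> * m x"
        using x \<open>\<epsilon> > 0\<close> by (simp add: field_simps)
    qed
  qed
  have phi0: "\<phi> x = 0" if x: "x \<in> ?I" for x
  proof (rule ccontr)
    assume ne: "\<phi> x \<noteq> 0"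
    show False
    proof (cases "\<phi> x > 0")
      case True
      obtain b where b: "x < b" "b < 1" "\<bar>\<phi> b\<bar> < \<phi> x" using small_r[OF True x] by blast
      have "\<phi> x \<le> \<phi> b" by (rule mono) (use x b in auto)
      then show False using b by linarith
    next
      case False
      then have neg: "- \<phi> x > 0" using ne by linarith
      obtain a where a: "-1 < a" "a < x" "\<bar>\<phi> a\<bar> < - \<phi> x" using small_l[OF neg x] by blast
      have "\<phi> a \<le> \<phi> x" by (rule mono) (use x a in auto)
      then show False using a by linarith
    qed
  qed
  have h0: "h x = 0" if x: "x \<in> ?I" for x
  proof -
    have "(\<phi> has_real_derivative 0) (at x)"
      by (rule has_field_derivative_transform_within_open[of "\<lambda>_. 0" 0 x ?I]) (use x phi0 in auto)
    then have "e x = 0" using DERIV_unique[OF phider[OF x]] by blast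
    moreover have "0 \<le> w x * (1-x\<^sup>2) * (hp x)\<^sup>2" using pos[OF x] wpos[of x] by simp
    ultimately have "w x * (h x)\<^sup>2 / (1-x\<^sup>2) \<le> 0" unfolding e_def by linarith
    then have "(h x)\<^sup>2 \<le> 0" using pos[OF x] wpos[of x] by (simp add: divide_le_0_iff zero_le_mult_iff mult_le_0_iff)
    then show ?thesis by simp
  qed
  show ?thesis
  proof
    fix x
    show "g1 x = g2 x"
    proof (cases "x \<in> ?I")
      case True then show ?thesis using h0 by (simp add: h_def)
    next
      case False then show ?thesis using G1 G2 by auto
    qed
  qed
qed



lemma exp_err: fixes z :: real assumes "\<bar>z\<bar> \<le> 1/2" shows "\<bar>exp z - 1 - z\<bar> \<le> 2 * z\<^sup>2"
proof -
  have lo: "1 + z \<le> exp z" by simp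
  have up: "exp z \<le> 1 + z + 2 * z\<^sup>2"
  proof (cases "z \<ge> 0")
    case True
    then have "exp z \<le> 1 + z + z\<^sup>2" using exp_bound[of z] assms by auto
    moreover have "0 \<le> z\<^sup>2" by simp
    ultimately show ?thesis by linarith
  next
    case False
    have e: "1 - z \<le> exp (-z)" using exp_ge_add_one_self[of "-z"] by simp
    have pos: "0 < 1 - z" using False by simp
    have "exp z = 1 / exp (-z)" by (simp add: exp_minus field_simps)
    also have "\<dots> \<le> 1 / (1 - z)" using e pos by (intro divide_left_mono) auto
    also have "\<dots> \<le> 1 + z + 2 * z\<^sup>2"
    proof -
      have "1 \<le> (1 + z + 2 * z\<^sup>2) * (1 - z)"
      proof -
        have "(1 + z + 2 * z\<^sup>2) * (1 - z) = 1 + z\<^sup>2 * (1 - 2*z)" by (simp add: power2_eq_square algebra_simps)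
        moreover have "0 \<le> z\<^sup>2 * (1 - 2*z)" using False by simp
        ultimately show ?thesis by simp
      qed
      then show ?thesis using pos by (simp add: divide_simps)
    qed
    finally show ?thesis .
  qed
  have z0: "0 \<le> z\<^sup>2" by simp
  show ?thesis using lo up z0 unfolding abs_le_iff by linarith
qed

lemma abs3a: "\<bar>- a + b - c\<bar> \<le> \<bar>a\<bar> + \<bar>b\<bar> + \<bar>(c::real)\<bar>" by arith

context fixes d :: real assumes d: "d \<ge> 2"
begin

lemma dpos': "d > 0" using d by simp

lemma z_bound: "y \<in> {-1..1} \<Longrightarrow> \<bar>y/(2*d)\<bar> \<le> 1/(2*d)"
  using d by (auto simp: abs_div divide_simps)

lemma rho_bound: assumes "y \<in> {-1..1}" shows "\<bar>rr d y - 1 - y/(2*d)\<bar> \<le> 1/(2*d\<^sup>2)"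
proof -
  have zb: "\<bar>y/(2*d)\<bar> \<le> 1/(2*d)" by (rule z_bound[OF assms])
  have "1/(2*d) \<le> 1/2" using d by (simp add: divide_simps)
  then have "\<bar>rr d y - 1 - y/(2*d)\<bar> \<le> 2 * (y/(2*d))\<^sup>2" unfolding rr_def using zb by (intro exp_err) linarith
  also have "\<dots> \<le> 2 * (1/(2*d))\<^sup>2"
  proof -
    have "\<bar>y/(2*d)\<bar>\<^sup>2 \<le> (1/(2*d))\<^sup>2" by (rule power_mono[OF zb]) simp
    then show ?thesis unfolding power2_abs by simp
  qed
  also have "\<dots> = 1/(2*d\<^sup>2)" by (simp add: power2_eq_square)
  finally show ?thesis .
qed

lemma rr_m1: assumes "y \<in> {-1..1}" shows "\<bar>rr d y - 1\<bar> \<le> 1/d"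
proof -
  have "\<bar>rr d y - 1\<bar> \<le> \<bar>rr d y - 1 - y/(2*d)\<bar> + \<bar>y/(2*d)\<bar>" by linarith
  also have "\<dots> \<le> 1/(2*d\<^sup>2) + 1/(2*d)" using rho_bound[OF assms] z_bound[OF assms] by linarith
  also have "\<dots> \<le> 1/d" using d by (simp add: divide_simps power2_eq_square)
  finally show ?thesis .
qed

lemma rr_le2: assumes "y \<in> {-1..1}" shows "\<bar>rr d y\<bar> \<le> 2"
proof -
  have "1/d \<le> 1/2" using d by (simp add: divide_simps)
  then show ?thesis using rr_m1[OF assms] by (simp add: abs_le_iff)
qed

lemma cc_bound2: assumes "y \<in> {-1..1}" shows "\<bar>cc d y\<bar> \<le> 9/(8*d)"
proof -
  have y2: "0 \<le> 1 - y\<^sup>2" "1 - y\<^sup>2 \<le> 1" using assms by (auto simp: abs_square_le_1)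
  have a: "\<bar>y/d\<bar> \<le> 1/d" using assms d by (auto simp: abs_div divide_simps)
  have "(1-y\<^sup>2)/(4*d\<^sup>2) \<le> 1/(4*d\<^sup>2)" using y2 d by (intro divide_right_mono) auto
  also have "\<dots> \<le> 1/(8*d)" using d by (simp add: divide_simps power2_eq_square)
  finally have "\<bar>(1-y\<^sup>2)/(4*d\<^sup>2)\<bar> \<le> 1/(8*d)" using y2 by simp
  moreover have "\<bar>y/d - (1-y\<^sup>2)/(4*d\<^sup>2)\<bar> \<le> \<bar>y/d\<bar> + \<bar>(1-y\<^sup>2)/(4*d\<^sup>2)\<bar>" by (rule abs_triangle_ineq4)
  moreover have "1/d + 1/(8*d) = 9/(8*d)" using d by (simp add: field_simps)
  ultimately show ?thesis unfolding cc_def using a by linarith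
qed

abbreviation "v \<equiv> vv d"
abbreviation "FF0 \<equiv> FF d (vv d)"

lemma v_bound: "\<bar>v x\<bar> \<le> 2"
proof -
  define M where "M = norm (vfix d)"
  have vM: "\<bar>v y\<bar> \<le> M" for y using norm_bounded[of "vfix d" y] by (simp add: M_def vv_def)
  have FB: "\<bar>FF0 y\<bar> \<le> 2 + 9/16 * M" if "y \<in> {-1..1}" for y
  proof -
    have "\<bar>cc d y\<bar> * \<bar>v y\<bar> \<le> 9/16 * M" by (rule mult_mono[OF cc_bound[OF d that] vM]) auto
    then have "\<bar>cc d y * v y\<bar> \<le> 9/16 * M" by (simp add: abs_mult)
    then show ?thesis unfolding FF_def using rr_le2[OF that] by linarith
  qed
  have "\<bar>v y\<bar> \<le> (2 + 9/16 * M)/2" for y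
    using vv_eq_all[OF d, of y] Gr_bound[OF FFv_cont FB cl_in] by simp
  then have "M \<le> (2 + 9/16 * M)/2" unfolding M_def by (intro norm_bound) (simp add: vv_def)
  then have "M \<le> 2" by simp
  then show ?thesis using vM[of x] by linarith
qed

lemma Gr_const: "x \<in> {-1..1} \<Longrightarrow> Gr (\<lambda>y. c) x = c/2"
  using Gr_cmult[of c "\<lambda>y. 1" x] Gr_one by simp

lemma Gr_lin: "x \<in> {-1..1} \<Longrightarrow> Gr (\<lambda>y. c * y) x = c * x/6"
  using Gr_cmult[of c "\<lambda>y. y" x] Gr_id by simp

lemma v_half: assumes x: "x \<in> {-1..1}" shows "\<bar>v x + 1/2\<bar> \<le> 2/d"
proof -
  let ?H = "\<lambda>y. FF0 y + 1"
  have cH: "continuous_on {-1..1} ?H" by (intro continuous_intros FFv_cont)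
  have "v x = Gr (\<lambda>y. ?H y + (-1)) x" using vv_eq[OF d x] by simp
  also have "\<dots> = Gr ?H x - 1/2" using Gr_add[OF cH _ x, of "\<lambda>y. -1"] Gr_const[OF x, of "-1"] by simp
  finally have e: "v x + 1/2 = Gr ?H x" by simp
  have HB: "\<bar>?H y\<bar> \<le> 4/d" if "y \<in> {-1..1}" for y
  proof -
    have "\<bar>cc d y\<bar> * \<bar>v y\<bar> \<le> 9/(8*d) * 2" by (rule mult_mono[OF cc_bound2[OF that] v_bound]) (use dpos' in auto)
    then have "\<bar>cc d y * v y\<bar> \<le> 9/(8*d) * 2" by (simp add: abs_mult)
    moreover have "9/(8*d) * 2 \<le> 3/d" using d by (simp add: divide_simps)
    ultimately show ?thesis unfolding FF_def using rr_m1[OF that] by (simp add: abs_le_iff)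
  qed
  show ?thesis unfolding e using Gr_bound[OF cH HB x] by simp
qed

lemma v_second: assumes x: "x \<in> {-1..1}" shows "\<bar>v x + 1/2 + x/(6*d)\<bar> \<le> 3/(2*d\<^sup>2)"
proof -
  let ?H = "\<lambda>y. FF0 y + 1 + y/d"
  have cH: "continuous_on {-1..1} ?H" unfolding divide_inverse by (intro continuous_intros FFv_cont)
  have c2: "continuous_on {-1..1} (\<lambda>y. (- 1/d) * y)" by (intro continuous_intros)
  have cH2: "continuous_on {-1..1} (\<lambda>y. ?H y + (- 1/d) * y)" by (intro continuous_intros cH c2)
  have "v x = Gr (\<lambda>y. (?H y + (- 1/d) * y) + (-1)) x" using vv_eq[OF d x] by (simp add: algebra_simps)
  also have "\<dots> = Gr ?H x + Gr (\<lambda>y. (- 1/d) * y) x - 1/2"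
    using Gr_add[OF cH2 _ x, of "\<lambda>y. -1"] Gr_add[OF cH c2 x] Gr_const[OF x, of "-1"] by simp
  also have "\<dots> = Gr ?H x - x/(6*d) - 1/2" using Gr_lin[OF x, of "-1/d"] by simp
  finally have e: "v x + 1/2 + x/(6*d) = Gr ?H x" by simp
  have HB: "\<bar>?H y\<bar> \<le> 3/d\<^sup>2" if y: "y \<in> {-1..1}" for y
  proof -
    have eq: "?H y = - (rr d y - 1 - y/(2*d)) + (y/d) * (v y + 1/2) - (1-y\<^sup>2) * v y / (4*d\<^sup>2)"
      unfolding FF_def cc_def using dpos' by (simp add: field_simps)
    have y2: "0 \<le> 1 - y\<^sup>2" "1 - y\<^sup>2 \<le> 1" using y by (auto simp: abs_square_le_1)
    have "\<bar>y\<bar> * \<bar>v y + 1/2\<bar> \<le> 1 * (2/d)" using y v_half[OF y] by (intro mult_mono) auto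
    then have "\<bar>y\<bar> * \<bar>v y + 1/2\<bar> / d \<le> (2/d) / d" using dpos' by (intro divide_right_mono) auto
    moreover have "\<bar>(y/d) * (v y + 1/2)\<bar> = \<bar>y\<bar> * \<bar>v y + 1/2\<bar> / d" using dpos' by (simp add: abs_mult abs_div)
    ultimately have a1: "\<bar>(y/d) * (v y + 1/2)\<bar> \<le> (1/d) * (2/d)" by simp
    have "\<bar>(1-y\<^sup>2) * v y\<bar> \<le> 1 * 2" unfolding abs_mult using y2 v_bound[of y] by (intro mult_mono) auto
    then have "\<bar>(1-y\<^sup>2) * v y\<bar> / (4*d\<^sup>2) \<le> 1 * 2 / (4*d\<^sup>2)"
      using dpos' by (intro divide_right_mono) auto
    then have a2: "\<bar>(1-y\<^sup>2) * v y / (4*d\<^sup>2)\<bar> \<le> 1 * 2 / (4*d\<^sup>2)"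
      using dpos' by (simp add: abs_div)
    have tri: "\<bar>?H y\<bar> \<le> \<bar>rr d y - 1 - y/(2*d)\<bar> + \<bar>(y/d) * (v y + 1/2)\<bar> + \<bar>(1-y\<^sup>2) * v y / (4*d\<^sup>2)\<bar>"
      unfolding eq by (rule abs3a)
    define u where "u = 1/d\<^sup>2"
    have "1/(2*d\<^sup>2) = u/2" "(1/d) * (2/d) = 2*u" "1 * 2 / (4*d\<^sup>2) = u/2" "3/d\<^sup>2 = 3*u"
      unfolding u_def by (simp_all add: field_simps power2_eq_square)
    then show ?thesis using tri rho_bound[OF y] a1 a2 by linarith
  qed
  show ?thesis unfolding e using Gr_bound[OF cH HB x] by simp
qed

definition psi :: "real \<Rightarrow> real" where
  "psi x = rr d x * v x - (- 1/2 - 5*x/(12*d))"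

lemma psi_bound: assumes x: "x \<in> {-1..1}" shows "\<bar>psi x\<bar> \<le> 3/d\<^sup>2"
proof -
  define \<rho> where "\<rho> = rr d x - 1 - x/(2*d)"
  define E where "E = v x + 1/2 + x/(6*d)"
  have eq: "psi x = \<rho> * v x + (1 + x/(2*d)) * E - x\<^sup>2/(12*d\<^sup>2)"
    unfolding psi_def \<rho>_def E_def using dpos' by (simp add: field_simps power2_eq_square)
  have "\<bar>\<rho>\<bar> * \<bar>v x\<bar> \<le> 1/(2*d\<^sup>2) * 2" unfolding \<rho>_def by (rule mult_mono[OF rho_bound[OF x] v_bound]) auto
  then have b1: "\<bar>\<rho> * v x\<bar> \<le> 1/(2*d\<^sup>2) * 2" by (simp add: abs_mult)
  have zb: "\<bar>1 + x/(2*d)\<bar> \<le> 5/4" using z_bound[OF x] d by (simp add: abs_le_iff divide_simps)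
  have "\<bar>1 + x/(2*d)\<bar> * \<bar>E\<bar> \<le> 5/4 * (3/(2*d\<^sup>2))" unfolding E_def by (rule mult_mono[OF zb v_second[OF x]]) auto
  then have b2: "\<bar>(1 + x/(2*d)) * E\<bar> \<le> 5/4 * (3/(2*d\<^sup>2))" by (simp add: abs_mult)
  have "x\<^sup>2 \<le> 1" using x by (auto simp: abs_square_le_1)
  then have b3: "\<bar>x\<^sup>2/(12*d\<^sup>2)\<bar> \<le> 1/(12*d\<^sup>2)" using d by (simp add: divide_right_mono)
  define u where "u = 1/d\<^sup>2"
  have "1/(2*d\<^sup>2) * 2 = u" "5/4 * (3/(2*d\<^sup>2)) = 15/8 * u" "1/(12*d\<^sup>2) = u/12" "3/d\<^sup>2 = 3*u"
    unfolding u_def by (simp_all add: field_simps)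
  moreover have "\<bar>psi x\<bar> \<le> \<bar>\<rho> * v x\<bar> + \<bar>(1 + x/(2*d)) * E\<bar> + \<bar>x\<^sup>2/(12*d\<^sup>2)\<bar>"
    unfolding eq by arith
  moreover have "u \<ge> 0" unfolding u_def by simp
  ultimately show ?thesis using b1 b2 b3 by linarith
qed

lemma psi_cont: "continuous_on {-1..1} psi"
  unfolding psi_def rr_def divide_inverse by (intro continuous_intros vv_cont)

definition DD :: real where "DD = integral {-1..1} (\<lambda>x. (1-x\<^sup>2) * (rr d x * v x))"
definition NN :: real where "NN = integral {-1..1} (\<lambda>x. x * (1-x\<^sup>2) * (rr d x * v x))"

lemma err_int:
  assumes "\<And>x. x \<in> {-1..1} \<Longrightarrow> \<bar>k x\<bar> \<le> 1 - x\<^sup>2" "continuous_on {-1..1} k"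
  shows "\<bar>integral {-1..1} (\<lambda>x. k x * psi x)\<bar> \<le> 4/d\<^sup>2"
proof -
  have int2: "((\<lambda>x. (1 - x\<^sup>2) * (3/d\<^sup>2)) has_integral (4/3 * (3/d\<^sup>2))) {-1..1}"
  proof -
    have "((\<lambda>x. (1 - x\<^sup>2) * (3/d\<^sup>2)) has_integral ((1 - 1^3/3) * (3/d\<^sup>2) - ((-1) - (-1)^3/3) * (3/d\<^sup>2))) {-1..1}"
      by (rule ftc_real) (use dpos' in \<open>auto intro!: derivative_eq_intros simp: power2_eq_square field_simps\<close>)
    then show ?thesis by simp
  qed
  have "\<bar>integral {-1..1} (\<lambda>x. k x * psi x)\<bar> \<le> integral {-1..1} (\<lambda>x. (1 - x\<^sup>2) * (3/d\<^sup>2))"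
  proof (rule integral_norm_bound_integral[where 'a=real, simplified])
    show "(\<lambda>x. k x * psi x) integrable_on {-1..1}"
      by (intro integrable_continuous_interval continuous_intros assms(2) psi_cont)
    show "(\<lambda>x. (1 - x\<^sup>2) * (3/d\<^sup>2)) integrable_on {-1..1}" using int2 by blast
    fix x :: real assume x: "x \<in> {-1..1}"
    show "\<bar>k x * psi x\<bar> \<le> (1 - x\<^sup>2) * (3/d\<^sup>2)"
      unfolding abs_mult using assms(1)[OF x] psi_bound[OF x] by (intro mult_mono) auto
  qed
  also have "\<dots> = 4/d\<^sup>2" using integral_unique[OF int2] by simp
  finally show ?thesis .
qed

lemma DD_bound: "\<bar>DD + 2/3\<bar> \<le> 4/d\<^sup>2"
proof -
  have m: "((\<lambda>x. (1-x\<^sup>2) * (- 1/2 - 5*x/(12*d))) has_integral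
     ((- 1/2 * (1 - 1^3/3) - 5/(12*d) * (1^2/2 - 1^4/4)) - (- 1/2 * ((-1) - (-1)^3/3) - 5/(12*d) * ((-1)^2/2 - (-1)^4/4)))) {-1..1}"
    by (rule ftc_real) (use dpos' in \<open>auto intro!: derivative_eq_intros simp: power2_eq_square power3_eq_cube eval_nat_numeral field_simps\<close>)
  have i1: "(\<lambda>x. (1-x\<^sup>2) * (- 1/2 - 5*x/(12*d))) integrable_on {-1..1}" using m by blast
  have i2: "(\<lambda>x. (1-x\<^sup>2) * psi x) integrable_on {-1..1}"
    by (intro integrable_continuous_interval continuous_intros psi_cont)
  have "DD = integral {-1..1} (\<lambda>x. (1-x\<^sup>2) * (- 1/2 - 5*x/(12*d)) + (1-x\<^sup>2) * psi x)"
    unfolding DD_def psi_def by (simp add: algebra_simps)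
  also have "\<dots> = -2/3 + integral {-1..1} (\<lambda>x. (1-x\<^sup>2) * psi x)"
    using integral_add[OF i1 i2] integral_unique[OF m] by simp
  finally have e: "DD + 2/3 = integral {-1..1} (\<lambda>x. (1-x\<^sup>2) * psi x)" by simp
  show ?thesis unfolding e
    by (rule err_int) (auto simp: abs_square_le_1 intro!: continuous_intros)
qed

lemma NN_bound: "\<bar>NN + 1/(9*d)\<bar> \<le> 4/d\<^sup>2"
proof -
  have m: "((\<lambda>x. x * (1-x\<^sup>2) * (- 1/2 - 5*x/(12*d))) has_integral
     ((- 1/2 * (1^2/2 - 1^4/4) - 5/(12*d) * (1^3/3 - 1^5/5)) - (- 1/2 * ((-1)^2/2 - (-1)^4/4) - 5/(12*d) * ((-1)^3/3 - (-1)^5/5)))) {-1..1}"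
    by (rule ftc_real) (use dpos' in \<open>auto intro!: derivative_eq_intros simp: power2_eq_square power3_eq_cube eval_nat_numeral field_simps\<close>)
  have i1: "(\<lambda>x. x * (1-x\<^sup>2) * (- 1/2 - 5*x/(12*d))) integrable_on {-1..1}" using m by blast
  have i2: "(\<lambda>x. x * (1-x\<^sup>2) * psi x) integrable_on {-1..1}"
    by (intro integrable_continuous_interval continuous_intros psi_cont)
  have "NN = integral {-1..1} (\<lambda>x. x * (1-x\<^sup>2) * (- 1/2 - 5*x/(12*d)) + x * (1-x\<^sup>2) * psi x)"
    unfolding NN_def psi_def by (simp add: algebra_simps)
  also have "\<dots> = -1/(9*d) + integral {-1..1} (\<lambda>x. x * (1-x\<^sup>2) * psi x)"
    using integral_add[OF i1 i2] integral_unique[OF m] by simp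
  finally have e: "NN + 1/(9*d) = integral {-1..1} (\<lambda>x. x * (1-x\<^sup>2) * psi x)" by simp
  show ?thesis unfolding e
  proof (rule err_int)
    fix x :: real assume x: "x \<in> {-1..1}"
    have "0 \<le> 1 - x\<^sup>2" using x by (auto simp: abs_square_le_1)
    moreover have "\<bar>x\<bar> \<le> 1" using x by auto
    ultimately show "\<bar>x * (1-x\<^sup>2)\<bar> \<le> 1 - x\<^sup>2" using mult_right_mono[of "\<bar>x\<bar>" 1 "1-x\<^sup>2"] by (simp add: abs_mult)
  qed (intro continuous_intros)
qed

end


lemma gd_eq: assumes d: "d \<ge> 2" shows "gd d = gsol d"
  unfolding gd_def
proof (rule the_equality)
  show "is_gd d (gsol d)" by (rule gsol_is_gd[OF d])
  show "g = gsol d" if "is_gd d g" for g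
    by (rule is_gd_unique[OF _ that gsol_is_gd[OF d]]) (use d in simp)
qed

lemma subst_cos:
  assumes f: "continuous_on {-1..1} f"
  shows "integral {0..pi} (\<lambda>t. sin t * f (cos t)) = integral {-1..1} f"
proof -
  have f': "continuous_on {-1..1} (\<lambda>x. f (-x))"
    by (rule continuous_on_compose2[OF f]) (auto intro: continuous_intros)
  have "((\<lambda>t. sin t *\<^sub>R (\<lambda>x. f (-x)) (- cos t)) has_integral integral {- cos 0..- cos pi} (\<lambda>x. f (-x))) {0..pi}"
  proof (rule has_integral_substitution[where c="-1" and d=1, OF _ _ _ f'])
    show "0 \<le> pi" by simp
    show "- cos 0 \<le> - cos pi" by simp
    show "(\<lambda>t. - cos t) ` {0..pi} \<subseteq> {-1..1}" by auto
    show "((\<lambda>t. - cos t) has_real_derivative sin t) (at t within {0..pi})" for t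
      by (auto intro!: derivative_eq_intros)
  qed
  then have "((\<lambda>t. sin t * f (cos t)) has_integral integral {-1..1} (\<lambda>x. f (-x))) {0..pi}" by simp
  moreover have "integral {-1..1} (\<lambda>x. f (-x)) = integral {-1..1} f"
    using Henstock_Kurzweil_Integration.integral_reflect_real[of 1 "-1" f] by simp
  ultimately show ?thesis by (simp add: integral_unique)
qed

lemma c2_eq: assumes d: "d \<ge> 2" shows "c2 d = NN d / DD d"
proof -
  have ptw: "(sin t)\<^sup>2 * hd d (cos t) * Mfun d (cos t) * sin t = sin t * ((1 - (cos t)\<^sup>2) * (rr d (cos t) * vv d (cos t)))"
    if t: "t \<in> {0..pi}" for t
  proof (cases "sin t = 0")
    case True then show ?thesis by simp
  next
    case False
    then have st: "sin t > 0" using t sin_ge_zero[of t] by auto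
    have sq: "sqrt (1 - (cos t)\<^sup>2) = sin t" using st by (simp add: cos_squared_eq)
    have ci: "cos t \<in> {-1<..<1}"
    proof -
      have "(cos t)\<^sup>2 < 1" using st by (simp add: cos_squared_eq)
      then show ?thesis by (simp add: abs_square_less_1 abs_less_iff)
    qed
    have r: "rr d (cos t) > 0" by (simp add: rr_def)
    have e1: "exp (cos t / d) = rr d (cos t) * rr d (cos t)" by (simp add: rr_def exp_add[symmetric])
    have e2: "exp (- cos t / (2*d)) = 1 / rr d (cos t)" by (simp add: rr_def exp_minus field_simps)
    have hdq: "hd d (cos t) = vv d (cos t) / rr d (cos t)"
      unfolding hd_def gd_eq[OF d] gsol_def sq using ci st e2 by simp
    have c2s: "1 - (cos t)\<^sup>2 = (sin t)\<^sup>2" by (simp add: cos_squared_eq)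
    show ?thesis unfolding Mfun_def e1 c2s hdq using r by (simp add: field_simps power2_eq_square)
  qed
  have cN: "continuous_on {-1..1} (\<lambda>x. x * ((1 - x\<^sup>2) * (rr d x * vv d x)))"
    unfolding rr_def divide_inverse by (intro continuous_intros vv_cont)
  have cD: "continuous_on {-1..1} (\<lambda>x. (1 - x\<^sup>2) * (rr d x * vv d x))"
    unfolding rr_def divide_inverse by (intro continuous_intros vv_cont)
  have N: "integral {0..pi} (\<lambda>t. cos t * (sin t)\<^sup>2 * hd d (cos t) * Mfun d (cos t) * sin t) = NN d"
  proof -
    have "integral {0..pi} (\<lambda>t. cos t * (sin t)\<^sup>2 * hd d (cos t) * Mfun d (cos t) * sin t)
        = integral {0..pi} (\<lambda>t. sin t * (cos t * ((1 - (cos t)\<^sup>2) * (rr d (cos t) * vv d (cos t)))))"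
    proof (rule integral_cong)
      fix t assume t: "t \<in> {0..pi}"
      have "cos t * (sin t)\<^sup>2 * hd d (cos t) * Mfun d (cos t) * sin t
          = cos t * ((sin t)\<^sup>2 * hd d (cos t) * Mfun d (cos t) * sin t)" by (simp add: mult.assoc)
      also have "\<dots> = cos t * (sin t * ((1 - (cos t)\<^sup>2) * (rr d (cos t) * vv d (cos t))))" using ptw[OF t] by simp
      also have "\<dots> = sin t * (cos t * ((1 - (cos t)\<^sup>2) * (rr d (cos t) * vv d (cos t))))" by (simp add: mult.left_commute)
      finally show "cos t * (sin t)\<^sup>2 * hd d (cos t) * Mfun d (cos t) * sin t
          = sin t * (cos t * ((1 - (cos t)\<^sup>2) * (rr d (cos t) * vv d (cos t))))" .
    qed
    also have "\<dots> = NN d" unfolding NN_def[OF d] by (subst subst_cos[OF cN]) (simp add: mult.assoc)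
    finally show ?thesis .
  qed
  have D: "integral {0..pi} (\<lambda>t. (sin t)\<^sup>2 * hd d (cos t) * Mfun d (cos t) * sin t) = DD d"
  proof -
    have "integral {0..pi} (\<lambda>t. (sin t)\<^sup>2 * hd d (cos t) * Mfun d (cos t) * sin t)
        = integral {0..pi} (\<lambda>t. sin t * ((1 - (cos t)\<^sup>2) * (rr d (cos t) * vv d (cos t))))"
      by (rule integral_cong) (use ptw in simp)
    also have "\<dots> = DD d" unfolding DD_def[OF d] by (rule subst_cos[OF cD])
    finally show ?thesis .
  qed
  show ?thesis unfolding c2_def N D ..
qed

theorem propositionA2:
  shows "(\<lambda>d. c2 d - 1 / (6 * d)) \<in> smallo at_top (\<lambda>d. 1 / d)"
proof (rule smalloI_tendsto)
  have ev2: "eventually (\<lambda>d::real. d \<ge> 2) at_top" by (rule eventually_ge_at_top)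
  show "eventually (\<lambda>d::real. 1 / d \<noteq> 0) at_top" using ev2 by eventually_elim auto
  have inf: "filterlim (\<lambda>d::real. d) at_infinity at_top" by (rule filterlim_at_top_imp_at_infinity[OF filterlim_ident])
  have z: "((\<lambda>d::real. 4 / d) \<longlongrightarrow> 0) at_top" by (rule tendsto_divide_0[OF tendsto_const inf])
  have lN: "((\<lambda>d. d * NN d) \<longlongrightarrow> -1/9) at_top"
  proof -
    have "((\<lambda>d. d * NN d + 1/9) \<longlongrightarrow> 0) at_top"
    proof (rule Lim_null_comparison[OF _ z])
      show "\<forall>\<^sub>F d in at_top. norm (d * NN d + 1/9) \<le> 4 / d"
        using ev2
      proof eventually_elim
        case (elim d)
        have "\<bar>d * NN d + 1/9\<bar> = d * \<bar>NN d + 1/(9*d)\<bar>" using elim by (simp add: abs_mult field_simps)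
        also have "\<dots> \<le> d * (4/d\<^sup>2)" using NN_bound[OF elim] elim by (intro mult_left_mono) auto
        also have "\<dots> = 4/d" using elim by (simp add: power2_eq_square)
        finally show ?case by simp
      qed
    qed
    then have "((\<lambda>d. (d * NN d + 1/9) + (-1/9)) \<longlongrightarrow> 0 + (-1/9)) at_top" by (intro tendsto_intros)
    then show ?thesis by simp
  qed
  have lD: "(DD \<longlongrightarrow> -2/3) at_top"
  proof -
    have z2: "((\<lambda>d::real. 4 / d\<^sup>2) \<longlongrightarrow> 0) at_top"
    proof (rule Lim_null_comparison[OF _ z])
      show "\<forall>\<^sub>F d in at_top. norm (4 / d\<^sup>2) \<le> 4 / (d::real)"
        using ev2 by eventually_elim (auto simp: divide_simps power2_eq_square)
    qed
    have "((\<lambda>d. DD d + 2/3) \<longlongrightarrow> 0) at_top"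
      by (rule Lim_null_comparison[OF _ z2]) (use ev2 in \<open>eventually_elim, use DD_bound in auto\<close>)
    then have "((\<lambda>d. (DD d + 2/3) + (-2/3)) \<longlongrightarrow> 0 + (-2/3)) at_top" by (intro tendsto_intros)
    then show ?thesis by simp
  qed
  have "((\<lambda>d. d * NN d / DD d - 1/6) \<longlongrightarrow> (-1/9) / (-2/3) - 1/6) at_top"
    by (intro tendsto_intros lN lD) auto
  then have lim: "((\<lambda>d. d * NN d / DD d - 1/6) \<longlongrightarrow> 0) at_top" by simp
  show "((\<lambda>d. (c2 d - 1 / (6 * d)) / (1 / d)) \<longlongrightarrow> 0) at_top"
  proof (rule Lim_transform_eventually[OF lim])
    show "\<forall>\<^sub>F d in at_top. d * NN d / DD d - 1/6 = (c2 d - 1 / (6 * d)) / (1 / d)"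
      using ev2
    proof eventually_elim
      case (elim d)
      then show ?case using c2_eq[OF elim] by (simp add: field_simps)
    qed
  qed
qed


end
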